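(* Let $(\mathcal{M}^4,g)$ be a mixed super quasi-Einstein spacetime (notation as in the context) satisfying Einstein's field equation without cosmological constant, $\mathrm{Ric}-\frac{r}{2}g=\kappa T$ with $\kappa\neq0$ constant. If the space-matter tensor $P$ is divergence-free, then the energy density $\sigma$ is constant.
   Context: A mixed super quasi-Einstein spacetime is a 4-dimensional Lorentzian manifold $(\mathcal{M}^4,g)$ with Levi-Civita connection $\nabla$, curvature $R(X,Y)Z=\nabla_X\nabla_YZ-\nabla_Y\nabla_XZ-\nabla_{[X,Y]}Z$, $R(X,Y,Z,W)=g(R(X,Y)Z,W)$, Ricci tensor $\mathrm{Ric}$ (not identically zero) and scalar curvature $r$, such that $\mathrm{Ric}(X,Y)=\Psi_1 g(X,Y)+\Psi_2\mathcal{A}(X)\mathcal{A}(Y)+\Psi_3\mathcal{B}(X)\mathcal{B}(Y)+\Psi_4(\mathcal{A}(X)\mathcal{B}(Y)+\mathcal{B}(X)\mathcal{A}(Y))+\Psi_5\mathcal{D}(X,Y)$, where $\Psi_i$ are smooth functions with $\Psi_2,\Psi_3,\Psi_4,\Psi_5\neq0$; $\xi_1,\xi_2$ are vector fields with $g(\xi_1,\xi_1)=-1$, $g(\xi_2,\xi_2)=1$, $g(\xi_1,\xi_2)=0$; $\mathcal{A}=g(\cdot,\xi_1)$, $\mathcal{B}=g(\cdot,\xi_2)$; $\mathcal{D}$ is a symmetric trace-free $(0,2)$-tensor with $\mathcal{D}(X,\xi_1)=0$. The space-matter tensor is $P=R+\frac{\kappa}{2}\,g\wedge T-\sigma G$,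 where $\sigma$ is the energy density function, $(g\wedge T)(X,Y,Z,W)=g(X,W)T(Y,Z)+g(Y,Z)T(X,W)-g(X,Z)T(Y,W)-g(Y,W)T(X,Z)$ and $G(X,Y,Z,W)=g(X,W)g(Y,Z)-g(X,Z)g(Y,W)$. $P$ is divergence-free if $\sum_i\varepsilon_i(\nabla_{e_i}P)(X,Y,Z,e_i)=0$ for all $X,Y,Z$, with $\{e_i\}$ a local orthonormal frame and $\varepsilon_i=g(e_i,e_i)$. *)

theory Defs
  imports "HOL-Analysis.Analysis"
begin

text \<open>Local coordinate model of a 4-dimensional Lorentzian manifold: an open connected
  set U of real^4 with metric components g x $ a $ b.  Tensor fields are given by
  their coordinate components, point first, then indices.\<close>

type_synonym pt = "real^4"

definition pd :: "4 \<Rightarrow> (pt \<Rightarrow> real) \<Rightarrow> pt \<Rightarrow> real" where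
  "pd i f x = frechet_derivative f (at x) (axis i 1)"

fun C_k :: "nat \<Rightarrow> pt set \<Rightarrow> (pt \<Rightarrow> real) \<Rightarrow> bool" where
  "C_k 0 U f = continuous_on U f"
| "C_k (Suc n) U f = (f differentiable_on U \<and> (\<forall>i. C_k n U (pd i f)))"

definition smooth_on :: "pt set \<Rightarrow> (pt \<Rightarrow> real) \<Rightarrow> bool" where
  "smooth_on U f = (\<forall>n. C_k n U f)"

definition gform :: "(pt \<Rightarrow> real^4^4) \<Rightarrow> pt \<Rightarrow> real^4 \<Rightarrow> real^4 \<Rightarrow> real" where
  "gform g x X Y = (\<Sum>a\<in>UNIV. \<Sum>b\<in>UNIV. X $ a * Y $ b * g x $ a $ b)"

definition ginv :: "(pt \<Rightarrow> real^4^4) \<Rightarrow> pt \<Rightarrow> real^4^4" where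
  "ginv g x = matrix_inv (g x)"

definition lorentzian_on :: "pt set \<Rightarrow> (pt \<Rightarrow> real^4^4) \<Rightarrow> bool" where
  "lorentzian_on U g \<longleftrightarrow>
     (\<forall>a b. smooth_on U (\<lambda>y. g y $ a $ b)) \<and>
     (\<forall>x\<in>U. (\<forall>a b. g x $ a $ b = g x $ b $ a) \<and>
        (\<exists>e :: 4 \<Rightarrow> real^4. \<forall>a b. gform g x (e a) (e b) =
            (if a = b then (if a = 0 then -1 else 1) else 0)))"

definition christoffel :: "(pt \<Rightarrow> real^4^4) \<Rightarrow> pt \<Rightarrow> 4 \<Rightarrow> 4 \<Rightarrow> 4 \<Rightarrow> real" where
  "christoffel g x k i j = (1/2) * (\<Sum>l\<in>UNIV. ginv g x $ k $ l *
      (pd i (\<lambda>y. g y $ j $ l) x + pd j (\<lambda>y. g y $ i $ l) x - pd l (\<lambda>y. g y $ i $ j) x))"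

text \<open>R(d_i,d_j)d_k = sum_l riem_up g x l i j k d_l, with
  R(X,Y)Z = nabla_X nabla_Y Z - nabla_Y nabla_X Z - nabla_[X,Y] Z.\<close>
definition riem_up :: "(pt \<Rightarrow> real^4^4) \<Rightarrow> pt \<Rightarrow> 4 \<Rightarrow> 4 \<Rightarrow> 4 \<Rightarrow> 4 \<Rightarrow> real" where
  "riem_up g x l i j k =
     pd i (\<lambda>y. christoffel g y l j k) x - pd j (\<lambda>y. christoffel g y l i k) x
     + (\<Sum>m\<in>UNIV. christoffel g x l i m * christoffel g x m j k
                  - christoffel g x l j m * christoffel g x m i k)"

definition riem :: "(pt \<Rightarrow> real^4^4) \<Rightarrow> pt \<Rightarrow> 4 \<Rightarrow> 4 \<Rightarrow> 4 \<Rightarrow> 4 \<Rightarrow> real" where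
  "riem g x i j k w = (\<Sum>l\<in>UNIV. riem_up g x l i j k * g x $ l $ w)"

definition ricci :: "(pt \<Rightarrow> real^4^4) \<Rightarrow> pt \<Rightarrow> 4 \<Rightarrow> 4 \<Rightarrow> real" where
  "ricci g x j k = (\<Sum>i\<in>UNIV. riem_up g x i i j k)"

definition scal :: "(pt \<Rightarrow> real^4^4) \<Rightarrow> pt \<Rightarrow> real" where
  "scal g x = (\<Sum>j\<in>UNIV. \<Sum>k\<in>UNIV. ginv g x $ j $ k * ricci g x j k)"

definition cov4 :: "(pt \<Rightarrow> real^4^4) \<Rightarrow> (pt \<Rightarrow> 4 \<Rightarrow> 4 \<Rightarrow> 4 \<Rightarrow> 4 \<Rightarrow> real)
                     \<Rightarrow> pt \<Rightarrow> 4 \<Rightarrow> 4 \<Rightarrow> 4 \<Rightarrow> 4 \<Rightarrow> 4 \<Rightarrow> real" where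
  "cov4 g P x i a b c d =
     pd i (\<lambda>y. P y a b c d) x
     - (\<Sum>m\<in>UNIV. christoffel g x m i a * P x m b c d + christoffel g x m i b * P x a m c d
                 + christoffel g x m i c * P x a b m d + christoffel g x m i d * P x a b c m)"

definition cov4_eval :: "(pt \<Rightarrow> real^4^4) \<Rightarrow> (pt \<Rightarrow> 4 \<Rightarrow> 4 \<Rightarrow> 4 \<Rightarrow> 4 \<Rightarrow> real)
                     \<Rightarrow> pt \<Rightarrow> real^4 \<Rightarrow> real^4 \<Rightarrow> real^4 \<Rightarrow> real^4 \<Rightarrow> real^4 \<Rightarrow> real" where
  "cov4_eval g P x W X Y Z V =
     (\<Sum>i\<in>UNIV. \<Sum>a\<in>UNIV. \<Sum>b\<in>UNIV. \<Sum>c\<in>UNIV. \<Sum>d\<in>UNIV.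
        W $ i * X $ a * Y $ b * Z $ c * V $ d * cov4 g P x i a b c d)"

definition orthonormal_frame :: "(pt \<Rightarrow> real^4^4) \<Rightarrow> pt \<Rightarrow> (4 \<Rightarrow> real^4) \<Rightarrow> bool" where
  "orthonormal_frame g x e \<longleftrightarrow>
     (\<forall>a b. a \<noteq> b \<longrightarrow> gform g x (e a) (e b) = 0) \<and>
     (\<forall>a. gform g x (e a) (e a) = 1 \<or> gform g x (e a) (e a) = -1)"

definition divergence_free :: "pt set \<Rightarrow> (pt \<Rightarrow> real^4^4) \<Rightarrow> (pt \<Rightarrow> 4 \<Rightarrow> 4 \<Rightarrow> 4 \<Rightarrow> 4 \<Rightarrow> real) \<Rightarrow> bool" where
  "divergence_free U g P \<longleftrightarrow>
     (\<forall>x\<in>U. \<forall>e. orthonormal_frame g x e \<longrightarrow>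
        (\<forall>X Y Z. (\<Sum>i\<in>UNIV. gform g x (e i) (e i) * cov4_eval g P x (e i) X Y Z (e i)) = 0))"

text \<open>Space-matter tensor P = R + (kappa/2) g \<and> T - sigma G.\<close>
definition space_matter :: "(pt \<Rightarrow> real^4^4) \<Rightarrow> real \<Rightarrow> (pt \<Rightarrow> 4 \<Rightarrow> 4 \<Rightarrow> real) \<Rightarrow> (pt \<Rightarrow> real)
                            \<Rightarrow> pt \<Rightarrow> 4 \<Rightarrow> 4 \<Rightarrow> 4 \<Rightarrow> 4 \<Rightarrow> real" where
  "space_matter g \<kappa> T \<sigma> x a b c d =
     riem g x a b c d
     + \<kappa> / 2 * (g x $ a $ d * T x b c + g x $ b $ c * T x a d
                - g x $ a $ c * T x b d - g x $ b $ d * T x a c)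
     - \<sigma> x * (g x $ a $ d * g x $ b $ c - g x $ a $ c * g x $ b $ d)"

definition lower :: "(pt \<Rightarrow> real^4^4) \<Rightarrow> (pt \<Rightarrow> real^4) \<Rightarrow> pt \<Rightarrow> 4 \<Rightarrow> real" where
  "lower g \<xi> x a = (\<Sum>b\<in>UNIV. g x $ a $ b * \<xi> x $ b)"

definition msqe :: "pt set \<Rightarrow> (pt \<Rightarrow> real^4^4) \<Rightarrow> (pt \<Rightarrow> real) \<Rightarrow> (pt \<Rightarrow> real) \<Rightarrow> (pt \<Rightarrow> real)
     \<Rightarrow> (pt \<Rightarrow> real) \<Rightarrow> (pt \<Rightarrow> real) \<Rightarrow> (pt \<Rightarrow> real^4) \<Rightarrow> (pt \<Rightarrow> real^4)
     \<Rightarrow> (pt \<Rightarrow> 4 \<Rightarrow> 4 \<Rightarrow> real) \<Rightarrow> bool" where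
  "msqe U g \<Psi>1 \<Psi>2 \<Psi>3 \<Psi>4 \<Psi>5 \<xi>1 \<xi>2 D \<longleftrightarrow>
     lorentzian_on U g \<and>
     smooth_on U \<Psi>1 \<and> smooth_on U \<Psi>2 \<and> smooth_on U \<Psi>3 \<and> smooth_on U \<Psi>4 \<and> smooth_on U \<Psi>5 \<and>
     (\<forall>a. smooth_on U (\<lambda>y. \<xi>1 y $ a) \<and> smooth_on U (\<lambda>y. \<xi>2 y $ a)) \<and>
     (\<forall>a b. smooth_on U (\<lambda>y. D y a b)) \<and>
     (\<forall>x\<in>U. \<Psi>2 x \<noteq> 0 \<and> \<Psi>3 x \<noteq> 0 \<and> \<Psi>4 x \<noteq> 0 \<and> \<Psi>5 x \<noteq> 0) \<and>
     (\<forall>x\<in>U. gform g x (\<xi>1 x) (\<xi>1 x) = -1 \<and> gform g x (\<xi>2 x) (\<xi>2 x) = 1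
             \<and> gform g x (\<xi>1 x) (\<xi>2 x) = 0) \<and>
     (\<forall>x\<in>U. (\<forall>a b. D x a b = D x b a)
             \<and> (\<Sum>a\<in>UNIV. \<Sum>b\<in>UNIV. ginv g x $ a $ b * D x a b) = 0
             \<and> (\<forall>a. (\<Sum>b\<in>UNIV. D x a b * \<xi>1 x $ b) = 0)) \<and>
     (\<exists>x\<in>U. \<exists>a b. ricci g x a b \<noteq> 0) \<and>
     (\<forall>x\<in>U. \<forall>a b. ricci g x a b =
         \<Psi>1 x * g x $ a $ b
       + \<Psi>2 x * lower g \<xi>1 x a * lower g \<xi>1 x b
       + \<Psi>3 x * lower g \<xi>2 x a * lower g \<xi>2 x b
       + \<Psi>4 x * (lower g \<xi>1 x a * lower g \<xi>2 x b + lower g \<xi>2 x a * lower g \<xi>1 x b)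
       + \<Psi>5 x * D x a b)"

end

theory Submission
  imports Defs
begin


lemma pd_has: "(f has_derivative f') (at x) \<Longrightarrow> pd i f x = f' (axis i 1)"
  unfolding pd_def by (metis frechet_derivative_at)

lemma diffD: "f differentiable (at x) \<Longrightarrow> (f has_derivative frechet_derivative f (at x)) (at x)"
  using frechet_derivative_works by blast

lemma pd_add: "f differentiable (at x) \<Longrightarrow> g differentiable (at x) \<Longrightarrow>
   pd i (\<lambda>y. f y + g y) x = pd i f x + pd i g x"
  by (rule pd_has[OF has_derivative_add[OF diffD diffD], THEN trans]) (auto simp: pd_def)

lemma pd_diff: "f differentiable (at x) \<Longrightarrow> g differentiable (at x) \<Longrightarrow>
   pd i (\<lambda>y. f y - g y) x = pd i f x - pd i g x"
  by (rule pd_has[OF has_derivative_diff[OF diffD diffD], THEN trans]) (auto simp: pd_def)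

lemma pd_mult: "f differentiable (at x) \<Longrightarrow> g differentiable (at x) \<Longrightarrow>
   pd i (\<lambda>y. f y * g y) x = f x * pd i g x + pd i f x * g x"
  for f g :: "pt \<Rightarrow> real"
  by (rule pd_has[OF has_derivative_mult[OF diffD diffD], THEN trans]) (auto simp: pd_def)

lemma pd_const: "pd i (\<lambda>y. c) x = 0"
  by (rule pd_has[OF has_derivative_const, THEN trans]) auto

lemma pd_cmult: "f differentiable (at x) \<Longrightarrow> pd i (\<lambda>y. c * f y) x = c * pd i f x"
  for f :: "pt \<Rightarrow> real"
  by (rule pd_has[OF has_derivative_mult[OF has_derivative_const diffD], THEN trans]) (auto simp: pd_def)

lemma pd_sum: "finite A \<Longrightarrow> (\<And>a. a \<in> A \<Longrightarrow> f a differentiable (at x)) \<Longrightarrow>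
   pd i (\<lambda>y. \<Sum>a\<in>A. f a y) x = (\<Sum>a\<in>A. pd i (f a) x)"
  for f :: "'a \<Rightarrow> pt \<Rightarrow> real"
  apply (rule pd_has[OF has_derivative_sum[of A f "\<lambda>a. frechet_derivative (f a) (at x)"], THEN trans])
  apply (auto simp: pd_def intro: diffD)
  done

lemma pd_local: assumes "open S" "x \<in> S" "\<And>y. y \<in> S \<Longrightarrow> f y = g y"
  shows "pd i f x = pd i g x"
proof -
  have "(\<lambda>f'. (f has_derivative f') (at x)) = (\<lambda>f'. (g has_derivative f') (at x))"
    using has_derivative_transform_within_open[of f _ x UNIV S g] has_derivative_transform_within_open[of g _ x UNIV S f] assms
    by (auto intro!: ext)
  then show ?thesis unfolding pd_def frechet_derivative_def by simp
qed


lemma Ck_diff_at: "open U \<Longrightarrow> C_k (Suc n) U f \<Longrightarrow> x \<in> U \<Longrightarrow> f differentiable (at x)"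
  using differentiable_on_eq_differentiable_at by auto

lemma Ck_cont: "C_k n U f \<Longrightarrow> continuous_on U f"
  by (cases n) (auto intro: differentiable_imp_continuous_on)

lemma Ck_Suc_mono: "C_k (Suc n) U f \<Longrightarrow> C_k n U f"
  by (induction n arbitrary: f) (auto intro: differentiable_imp_continuous_on)

lemma diff_transform: "open S \<Longrightarrow> x \<in> S \<Longrightarrow> (\<And>y. y \<in> S \<Longrightarrow> f y = g y) \<Longrightarrow>
  f differentiable (at x) \<Longrightarrow> g differentiable (at x)"
  unfolding differentiable_def using has_derivative_transform_within_open by blast

lemma Ck_mono': "C_k n U f \<Longrightarrow> m \<le> n \<Longrightarrow> C_k m U f"
proof (induction n arbitrary: m)
  case 0 thus ?case by simp
next
  case (Suc n) thus ?case using Ck_Suc_mono by (cases "m = Suc n") auto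
qed

lemma Ck_cong: "open U \<Longrightarrow> (\<And>y. y \<in> U \<Longrightarrow> f y = g y) \<Longrightarrow> C_k n U f \<Longrightarrow> C_k n U g"
proof (induction n arbitrary: f g)
  case 0 thus ?case using continuous_on_cong by auto
next
  case (Suc n)
  have "g differentiable_on U"
    unfolding differentiable_on_eq_differentiable_at[OF \<open>open U\<close>]
  proof
    fix x assume "x \<in> U"
    have "f differentiable (at x)" using Suc.prems \<open>x \<in> U\<close> Ck_diff_at by blast
    then show "g differentiable (at x)" using diff_transform[OF \<open>open U\<close> \<open>x \<in> U\<close>] Suc.prems by blast
  qed
  moreover have "C_k n U (pd i g)" for i
  proof -
    have "C_k n U (pd i f)" using Suc.prems by simp
    then show ?thesis
      by (rule Suc.IH[OF \<open>open U\<close>, rotated]) (rule pd_local[OF \<open>open U\<close>], auto simp: Suc.prems)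
  qed
  ultimately show ?case by simp
qed

lemma Ck_const: "C_k n U (\<lambda>y. c)"
proof (induction n arbitrary: c)
  case 0 thus ?case by simp
next
  case (Suc n)
  have "pd i (\<lambda>y. c) = (\<lambda>y. 0)" for i by (rule ext) (simp add: pd_const)
  then show ?case using Suc by simp
qed

lemma Ck_add: "open U \<Longrightarrow> C_k n U f \<Longrightarrow> C_k n U g \<Longrightarrow> C_k n U (\<lambda>y. f y + g y)"
proof (induction n arbitrary: f g)
  case 0 thus ?case by (auto intro: continuous_on_add)
next
  case (Suc n)
  have "(\<lambda>y. f y + g y) differentiable_on U" using Suc.prems by auto
  moreover have "C_k n U (pd i (\<lambda>y. f y + g y))" for i
  proof -
    have "C_k n U (\<lambda>y. pd i f y + pd i g y)" using Suc by auto
    then show ?thesis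
      by (rule Ck_cong[OF \<open>open U\<close>, rotated]) (rule pd_add[symmetric]; rule Ck_diff_at[OF \<open>open U\<close>]; use Suc.prems in auto)
  qed
  ultimately show ?case by simp
qed

lemma Ck_mult: "open U \<Longrightarrow> C_k n U f \<Longrightarrow> C_k n U g \<Longrightarrow> C_k n U (\<lambda>y. f y * g y)"
  for f g :: "pt \<Rightarrow> real"
proof (induction n arbitrary: f g)
  case 0 thus ?case by (auto intro: continuous_on_mult)
next
  case (Suc n)
  have "(\<lambda>y. f y * g y) differentiable_on U" using Suc.prems by auto
  moreover have "C_k n U (pd i (\<lambda>y. f y * g y))" for i
  proof -
    have "C_k n U f" "C_k n U g" by (rule Ck_Suc_mono, rule Suc.prems)+
    then have "C_k n U (\<lambda>y. f y * pd i g y + pd i f y * g y)"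
      using Suc by (intro Ck_add Suc.IH) auto
    then show ?thesis
      by (rule Ck_cong[OF \<open>open U\<close>, rotated]) (rule pd_mult[symmetric]; rule Ck_diff_at[OF \<open>open U\<close>]; use Suc.prems in auto)
  qed
  ultimately show ?case by simp
qed

lemma Ck_cmult: "open U \<Longrightarrow> C_k n U f \<Longrightarrow> C_k n U (\<lambda>y. c * f y)"
  for f :: "pt \<Rightarrow> real"
  by (rule Ck_mult[OF _ Ck_const])

lemma Ck_diff: "open U \<Longrightarrow> C_k n U f \<Longrightarrow> C_k n U g \<Longrightarrow> C_k n U (\<lambda>y. f y - g y)"
  for f g :: "pt \<Rightarrow> real"
  using Ck_add[of U n f "\<lambda>y. (-1) * g y"] Ck_cmult[of U n g "-1"] by simp

lemma Ck_sum: 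
  fixes f :: "'a \<Rightarrow> pt \<Rightarrow> real"
  assumes "open U" "finite A" "\<And>a. a \<in> A \<Longrightarrow> C_k n U (f a)" shows "C_k n U (\<lambda>y. \<Sum>a\<in>A. f a y)"
  using assms(2,3) by (induction A rule: finite_induct) (auto intro: Ck_add[OF assms(1)] Ck_const)

lemma Ck_prod: 
  fixes f :: "'a \<Rightarrow> pt \<Rightarrow> real"
  assumes "open U" "finite A" "\<And>a. a \<in> A \<Longrightarrow> C_k n U (f a)" shows "C_k n U (\<lambda>y. \<Prod>a\<in>A. f a y)"
  using assms(2,3) by (induction A rule: finite_induct) (auto intro: Ck_mult[OF assms(1)] Ck_const)

lemma Ck_inverse: "open U \<Longrightarrow> (\<And>y. y \<in> U \<Longrightarrow> f y \<noteq> 0) \<Longrightarrow> C_k n U f \<Longrightarrow> C_k n U (\<lambda>y. inverse (f y))"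
  for f :: "pt \<Rightarrow> real"
proof (induction n arbitrary: f)
  case 0 thus ?case by (auto intro: continuous_on_inverse)
next
  case (Suc n)
  have d: "f differentiable (at y)" if "y \<in> U" for y using Suc.prems that Ck_diff_at by blast
  have "(\<lambda>y. inverse (f y)) differentiable_on U"
    unfolding differentiable_on_eq_differentiable_at[OF \<open>open U\<close>]
    using Suc.prems d by (auto intro!: differentiable_inverse)
  moreover have "C_k n U (pd i (\<lambda>y. inverse (f y)))" for i
  proof -
    have "C_k n U f" by (rule Ck_Suc_mono, rule Suc.prems)+
    then have "C_k n U (\<lambda>y. - 1 * (inverse (f y) * pd i f y * inverse (f y)))"
      using Suc by (intro Ck_cmult Ck_mult Suc.IH) auto
    then show ?thesis
    proof (rule Ck_cong[OF \<open>open U\<close>, rotated])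
      fix y assume "y \<in> U"
      show "- 1 * (inverse (f y) * pd i f y * inverse (f y)) = pd i (\<lambda>y. inverse (f y)) y"
        using pd_has[OF Deriv.has_derivative_inverse[OF Suc.prems(2)[OF \<open>y\<in>U\<close>] diffD[OF d[OF \<open>y\<in>U\<close>]]], of i]
        by (simp add: pd_def)
    qed
  qed
  ultimately show ?case by simp
qed

lemma smooth_Ck: "smooth_on U f \<Longrightarrow> C_k n U f" by (simp add: smooth_on_def)

lemma smooth_diff_at: "open U \<Longrightarrow> smooth_on U f \<Longrightarrow> x \<in> U \<Longrightarrow> f differentiable (at x)"
  using Ck_diff_at smooth_Ck by blast

lemma smooth_pd: "smooth_on U f \<Longrightarrow> smooth_on U (pd i f)"
  unfolding smooth_on_def proof
  fix n assume "\<forall>n. C_k n U f" then have "C_k (Suc n) U f" by blast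
  then show "C_k n U (pd i f)" by simp
qed

lemma smooth_cong: "open U \<Longrightarrow> (\<And>y. y \<in> U \<Longrightarrow> f y = g y) \<Longrightarrow> smooth_on U f \<Longrightarrow> smooth_on U g"
  unfolding smooth_on_def using Ck_cong by blast

lemma smooth_const: "smooth_on U (\<lambda>y. c)" by (simp add: smooth_on_def Ck_const)
lemma smooth_add: "open U \<Longrightarrow> smooth_on U f \<Longrightarrow> smooth_on U g \<Longrightarrow> smooth_on U (\<lambda>y. f y + g y)"
  by (simp add: smooth_on_def Ck_add)
lemma smooth_diff: "open U \<Longrightarrow> smooth_on U f \<Longrightarrow> smooth_on U g \<Longrightarrow> smooth_on U (\<lambda>y. f y - g y)"
  for f g :: "pt \<Rightarrow> real"
  by (simp add: smooth_on_def Ck_diff)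
lemma smooth_mult: "open U \<Longrightarrow> smooth_on U f \<Longrightarrow> smooth_on U g \<Longrightarrow> smooth_on U (\<lambda>y. f y * g y)"
  for f g :: "pt \<Rightarrow> real"
  by (simp add: smooth_on_def Ck_mult)
lemma smooth_sum: "open U \<Longrightarrow> finite A \<Longrightarrow> (\<And>a. a \<in> A \<Longrightarrow> smooth_on U (f a)) \<Longrightarrow> smooth_on U (\<lambda>y. \<Sum>a\<in>A. f a y)"
  for f :: "'a \<Rightarrow> pt \<Rightarrow> real"
  by (simp add: smooth_on_def Ck_sum)
lemma smooth_prod: "open U \<Longrightarrow> finite A \<Longrightarrow> (\<And>a. a \<in> A \<Longrightarrow> smooth_on U (f a)) \<Longrightarrow> smooth_on U (\<lambda>y. \<Prod>a\<in>A. f a y)"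
  for f :: "'a \<Rightarrow> pt \<Rightarrow> real"
  by (simp add: smooth_on_def Ck_prod)
lemma smooth_inverse: "open U \<Longrightarrow> (\<And>y. y \<in> U \<Longrightarrow> f y \<noteq> 0) \<Longrightarrow> smooth_on U f \<Longrightarrow> smooth_on U (\<lambda>y. inverse (f y))"
  for f :: "pt \<Rightarrow> real"
  by (simp add: smooth_on_def Ck_inverse)


lemma line_deriv:
  assumes "f differentiable (at (p + t *\<^sub>R w))"
  shows "((\<lambda>s. f (p + s *\<^sub>R w)) has_real_derivative frechet_derivative f (at (p + t *\<^sub>R w)) w) (at t)"
proof -
  have l: "((\<lambda>s. p + s *\<^sub>R w) has_derivative (\<lambda>h. h *\<^sub>R w)) (at t)"
    by (auto intro!: derivative_eq_intros)
  have f: "(f has_derivative frechet_derivative f (at (p + t *\<^sub>R w))) (at (p + t *\<^sub>R w))"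
    using assms diffD by blast
  have lin: "linear (frechet_derivative f (at (p + t *\<^sub>R w)))"
    using f has_derivative_linear by blast
  have "((\<lambda>s. f (p + s *\<^sub>R w)) has_derivative (\<lambda>h. frechet_derivative f (at (p + t *\<^sub>R w)) (h *\<^sub>R w))) (at t)"
    using has_derivative_compose[OF l f] by simp
  moreover have "(\<lambda>h. frechet_derivative f (at (p + t *\<^sub>R w)) (h *\<^sub>R w)) = (\<lambda>h. h * frechet_derivative f (at (p + t *\<^sub>R w)) w)"
    using linear_scale[OF lin] by auto
  moreover have "(*) (frechet_derivative f (at (p + t *\<^sub>R w)) w) = (\<lambda>h. h * frechet_derivative f (at (p + t *\<^sub>R w)) w)"
    by (rule ext) simp
  ultimately show ?thesis unfolding has_field_derivative_def by simp
qed

lemma line_pd: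
  assumes "f differentiable (at (p + t *\<^sub>R axis i 1))"
  shows "((\<lambda>s. f (p + s *\<^sub>R axis i 1)) has_real_derivative pd i f (p + t *\<^sub>R axis i 1)) (at t)"
  using line_deriv[OF assms] by (simp add: pd_def)

lemma mvt2d:
  assumes U: "open U" and f: "C_k (Suc (Suc 0)) U f" and t: "t > 0"
    and box: "\<And>a b. 0 \<le> a \<Longrightarrow> a \<le> t \<Longrightarrow> 0 \<le> b \<Longrightarrow> b \<le> t \<Longrightarrow> x + a *\<^sub>R axis i 1 + b *\<^sub>R axis j 1 \<in> U"
  shows "\<exists>\<xi> \<eta>. 0 < \<xi> \<and> \<xi> < t \<and> 0 < \<eta> \<and> \<eta> < t \<and>
     f (x + t *\<^sub>R axis i 1 + t *\<^sub>R axis j 1) - f (x + t *\<^sub>R axis i 1) - f (x + t *\<^sub>R axis j 1) + f x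
     = t * t * pd j (pd i f) (x + \<xi> *\<^sub>R axis i 1 + \<eta> *\<^sub>R axis j 1)"
proof -
  define u where "u = (axis i 1 :: pt)"
  define v where "v = (axis j 1 :: pt)"
  have df: "f differentiable (at y)" if "y \<in> U" for y using Ck_diff_at[OF U f that] .
  have f1: "C_k (Suc 0) U (pd i f)" using f by simp
  have dfi: "pd i f differentiable (at y)" if "y \<in> U" for y using Ck_diff_at[OF U f1 that] .
  define \<phi> where "\<phi> s = f (x + t *\<^sub>R v + s *\<^sub>R u) - f (x + s *\<^sub>R u)" for s
  have "\<exists>z. 0 < z \<and> z < t \<and> \<phi> t - \<phi> 0 = (t - 0) * (pd i f (x + t *\<^sub>R v + z *\<^sub>R u) - pd i f (x + z *\<^sub>R u))"
  proof (rule MVT2[OF t])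
    fix s assume s: "0 \<le> s" "s \<le> t"
    have m1: "x + t *\<^sub>R v + s *\<^sub>R u \<in> U" using box[of s t] s t by (simp add: u_def v_def algebra_simps)
    have m2: "x + s *\<^sub>R u \<in> U" using box[of s 0] s t by (simp add: u_def v_def)
    show "DERIV \<phi> s :> pd i f (x + t *\<^sub>R v + s *\<^sub>R u) - pd i f (x + s *\<^sub>R u)"
      unfolding \<phi>_def u_def
      by (intro DERIV_diff line_pd) (use df m1 m2 in \<open>auto simp: u_def\<close>)
  qed
  then obtain \<xi> where \<xi>: "0 < \<xi>" "\<xi> < t"
    and e1: "\<phi> t - \<phi> 0 = t * (pd i f (x + t *\<^sub>R v + \<xi> *\<^sub>R u) - pd i f (x + \<xi> *\<^sub>R u))" by auto
  define \<psi> where "\<psi> s = pd i f (x + \<xi> *\<^sub>R u + s *\<^sub>R v)" for s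
  have "\<exists>z. 0 < z \<and> z < t \<and> \<psi> t - \<psi> 0 = (t - 0) * pd j (pd i f) (x + \<xi> *\<^sub>R u + z *\<^sub>R v)"
  proof (rule MVT2[OF t])
    fix s assume s: "0 \<le> s" "s \<le> t"
    have m1: "x + \<xi> *\<^sub>R u + s *\<^sub>R v \<in> U" using box[of \<xi> s] s \<xi> by (simp add: u_def v_def)
    show "DERIV \<psi> s :> pd j (pd i f) (x + \<xi> *\<^sub>R u + s *\<^sub>R v)"
      unfolding \<psi>_def v_def by (rule line_pd) (use dfi m1 in \<open>auto simp: v_def\<close>)
  qed
  then obtain \<eta> where \<eta>: "0 < \<eta>" "\<eta> < t"
    and e2: "\<psi> t - \<psi> 0 = t * pd j (pd i f) (x + \<xi> *\<^sub>R u + \<eta> *\<^sub>R v)" by auto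
  have "f (x + t *\<^sub>R u + t *\<^sub>R v) - f (x + t *\<^sub>R u) - f (x + t *\<^sub>R v) + f x = \<phi> t - \<phi> 0"
    by (simp add: \<phi>_def algebra_simps)
  also have "\<dots> = t * (\<psi> t - \<psi> 0)"
    using e1 by (simp add: \<psi>_def algebra_simps)
  finally show ?thesis using e2 \<xi> \<eta> unfolding u_def v_def by (intro exI[of _ \<xi>] exI[of _ \<eta>]) auto
qed

lemma schwarz:
  assumes U: "open U" and f: "C_k (Suc (Suc 0)) U f" and x: "x \<in> U"
  shows "pd j (pd i f) x = pd i (pd j f) x"
proof (rule ccontr)
  assume ne: "pd j (pd i f) x \<noteq> pd i (pd j f) x"
  define \<epsilon> where "\<epsilon> = \<bar>pd j (pd i f) x - pd i (pd j f) x\<bar> / 2"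
  have \<epsilon>: "\<epsilon> > 0" using ne by (simp add: \<epsilon>_def)
  have c1: "continuous_on U (pd j (pd i f))" using f Ck_cont[of 0 U "pd j (pd i f)"] by simp
  have c2: "continuous_on U (pd i (pd j f))" using f Ck_cont[of 0 U "pd i (pd j f)"] by simp
  obtain d1 where d1: "d1 > 0" "\<And>y. y \<in> U \<Longrightarrow> dist y x < d1 \<Longrightarrow> dist (pd j (pd i f) y) (pd j (pd i f) x) < \<epsilon>"
    using c1 x \<epsilon> unfolding continuous_on_iff by metis
  obtain d2 where d2: "d2 > 0" "\<And>y. y \<in> U \<Longrightarrow> dist y x < d2 \<Longrightarrow> dist (pd i (pd j f) y) (pd i (pd j f) x) < \<epsilon>"
    using c2 x \<epsilon> unfolding continuous_on_iff by metis
  obtain d3 where d3: "d3 > 0" "ball x d3 \<subseteq> U" using U x open_contains_ball by blast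
  define t where "t = min d1 (min d2 d3) / 3"
  have t: "t > 0" using d1 d2 d3 by (simp add: t_def)
  have near: "dist (x + a *\<^sub>R axis k 1 + b *\<^sub>R axis l 1) x < min d1 (min d2 d3)"
    if "0 \<le> a" "a \<le> t" "0 \<le> b" "b \<le> t" for a b k l
  proof -
    have "dist (x + a *\<^sub>R axis k 1 + b *\<^sub>R axis l 1) x = norm (a *\<^sub>R axis k 1 + b *\<^sub>R (axis l 1 :: pt))"
      by (simp add: dist_norm)
    also have "\<dots> \<le> norm (a *\<^sub>R (axis k 1 :: pt)) + norm (b *\<^sub>R (axis l 1 :: pt))" by (rule norm_triangle_ineq)
    also have "\<dots> = a + b" using that by simp
    also have "\<dots> < min d1 (min d2 d3)" using that t unfolding t_def by linarith
    finally show ?thesis .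
  qed
  have box: "x + a *\<^sub>R axis k 1 + b *\<^sub>R axis l 1 \<in> U"
    if "0 \<le> a" "a \<le> t" "0 \<le> b" "b \<le> t" for a b k l
    using near[OF that, of k l] d3 by (auto simp: dist_commute subset_iff)
  obtain \<xi>1 \<eta>1 where A: "0 < \<xi>1" "\<xi>1 < t" "0 < \<eta>1" "\<eta>1 < t"
     "f (x + t *\<^sub>R axis i 1 + t *\<^sub>R axis j 1) - f (x + t *\<^sub>R axis i 1) - f (x + t *\<^sub>R axis j 1) + f x
     = t * t * pd j (pd i f) (x + \<xi>1 *\<^sub>R axis i 1 + \<eta>1 *\<^sub>R axis j 1)"
    using mvt2d[OF U f t box, of i j] by blast
  obtain \<xi>2 \<eta>2 where B: "0 < \<xi>2" "\<xi>2 < t" "0 < \<eta>2" "\<eta>2 < t"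
     "f (x + t *\<^sub>R axis j 1 + t *\<^sub>R axis i 1) - f (x + t *\<^sub>R axis j 1) - f (x + t *\<^sub>R axis i 1) + f x
     = t * t * pd i (pd j f) (x + \<xi>2 *\<^sub>R axis j 1 + \<eta>2 *\<^sub>R axis i 1)"
    using mvt2d[OF U f t box, of j i] by blast
  have "t * t * pd j (pd i f) (x + \<xi>1 *\<^sub>R axis i 1 + \<eta>1 *\<^sub>R axis j 1) =
        t * t * pd i (pd j f) (x + \<xi>2 *\<^sub>R axis j 1 + \<eta>2 *\<^sub>R axis i 1)"
    using A(5) B(5) by (simp add: algebra_simps)
  then have eq: "pd j (pd i f) (x + \<xi>1 *\<^sub>R axis i 1 + \<eta>1 *\<^sub>R axis j 1) =
        pd i (pd j f) (x + \<xi>2 *\<^sub>R axis j 1 + \<eta>2 *\<^sub>R axis i 1)" using t by simp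
  have p1: "dist (pd j (pd i f) (x + \<xi>1 *\<^sub>R axis i 1 + \<eta>1 *\<^sub>R axis j 1)) (pd j (pd i f) x) < \<epsilon>"
  proof (rule d1(2))
    show "x + \<xi>1 *\<^sub>R axis i 1 + \<eta>1 *\<^sub>R axis j 1 \<in> U" using box A by simp
    have "dist (x + \<xi>1 *\<^sub>R axis i 1 + \<eta>1 *\<^sub>R axis j 1) x < min d1 (min d2 d3)" using near A by simp
    then show "dist (x + \<xi>1 *\<^sub>R axis i 1 + \<eta>1 *\<^sub>R axis j 1) x < d1" by simp
  qed
  have p2: "dist (pd i (pd j f) (x + \<xi>2 *\<^sub>R axis j 1 + \<eta>2 *\<^sub>R axis i 1)) (pd i (pd j f) x) < \<epsilon>"
  proof (rule d2(2))
    show "x + \<xi>2 *\<^sub>R axis j 1 + \<eta>2 *\<^sub>R axis i 1 \<in> U" using box B by simp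
    have "dist (x + \<xi>2 *\<^sub>R axis j 1 + \<eta>2 *\<^sub>R axis i 1) x < min d1 (min d2 d3)" using near B by simp
    then show "dist (x + \<xi>2 *\<^sub>R axis j 1 + \<eta>2 *\<^sub>R axis i 1) x < d2" by simp
  qed
  from p1 p2 eq have "\<bar>pd j (pd i f) x - pd i (pd j f) x\<bar> < 2 * \<epsilon>"
    by (simp add: dist_real_def)
  then show False by (simp add: \<epsilon>_def)
qed


lemma matrix_inv_eq:
  fixes A B :: "real^4^4"
  assumes "B ** A = mat 1" shows "matrix_inv A = B"
proof -
  have AB: "A ** B = mat 1" using assms matrix_left_right_inverse by blast
  have "A ** B = mat 1 \<and> B ** A = mat 1" using assms AB by simp
  then have ex: "A ** matrix_inv A = mat 1 \<and> matrix_inv A ** A = mat 1"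
    unfolding matrix_inv_def by (rule someI)
  have "matrix_inv A = matrix_inv A ** (A ** B)" using AB by simp
  also have "\<dots> = (matrix_inv A ** A) ** B" by (simp add: matrix_mul_assoc)
  also have "\<dots> = B" using ex by simp
  finally show ?thesis .
qed

definition eta :: "4 \<Rightarrow> 4 \<Rightarrow> real" where
  "eta a b = (if a = b then (if a = 0 then -1 else 1) else 0)"

lemma eta_sq: "(\<Sum>b\<in>UNIV. eta a b * eta b c) = (if a = c then 1 else 0)"
proof -
  have "(\<Sum>b\<in>UNIV. eta a b * eta b c) = eta a a * eta a c"
    by (subst sum.remove[of _ a]) (auto simp: eta_def intro!: sum.neutral)
  then show ?thesis by (simp add: eta_def)
qed

lemma frame_inv:
  fixes G :: "real^4^4" and e :: "4 \<Rightarrow> real^4"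
  assumes e: "\<And>a b. (\<Sum>c\<in>UNIV. \<Sum>d\<in>UNIV. e a $ c * e b $ d * G $ c $ d) = eta a b"
  shows "matrix_inv G = (\<chi> j d. \<Sum>a\<in>UNIV. e a $ j * eta a a * e a $ d)"
    and "G ** matrix_inv G = mat 1" and "matrix_inv G ** G = mat 1"
proof -
  define E :: "real^4^4" where "E = (\<chi> i a. e a $ i)"
  define N :: "real^4^4" where "N = (\<chi> a b. eta a b)"
  have c: "(transpose E ** G ** E) $ a $ b = (\<Sum>c\<in>UNIV. \<Sum>d\<in>UNIV. e a $ c * e b $ d * G $ c $ d)" for a b
    unfolding E_def
    apply (simp add: matrix_matrix_mult_def transpose_def sum_distrib_right)
    apply (subst sum.swap)
    apply (simp add: mult_ac)
    done
  have "transpose E ** G ** E = N"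
    unfolding N_def by (simp add: vec_eq_iff c e)
  then have "(transpose E ** G) ** (E ** N) = N ** N" by (simp add: matrix_mul_assoc)
  also have "N ** N = mat 1" unfolding N_def by (simp add: vec_eq_iff matrix_matrix_mult_def mat_def eta_sq)
  finally have "(E ** N) ** (transpose E ** G) = mat 1" using matrix_left_right_inverse by blast
  then have B: "(E ** N ** transpose E) ** G = mat 1" by (simp add: matrix_mul_assoc)
  then have mi: "matrix_inv G = E ** N ** transpose E" by (rule matrix_inv_eq)
  have "E ** N ** transpose E = (\<chi> j d. \<Sum>a\<in>UNIV. e a $ j * eta a a * e a $ d)"
  proof -
    have "(\<Sum>k\<in>UNIV. (\<Sum>a\<in>UNIV. e a $ j * eta a k) * e k $ d) = (\<Sum>a\<in>UNIV. e a $ j * eta a a * e a $ d)" for j d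
    proof -
      have "(\<Sum>k\<in>UNIV. (\<Sum>a\<in>UNIV. e a $ j * eta a k) * e k $ d) = (\<Sum>k\<in>UNIV. e k $ j * eta k k * e k $ d)"
      proof (rule sum.cong[OF refl])
        fix k
        have "(\<Sum>a\<in>UNIV. e a $ j * eta a k) = e k $ j * eta k k"
          by (subst sum.remove[of _ k]) (auto simp: eta_def intro!: sum.neutral)
        then show "(\<Sum>a\<in>UNIV. e a $ j * eta a k) * e k $ d = e k $ j * eta k k * e k $ d" by simp
      qed
      then show ?thesis by simp
    qed
    then show ?thesis unfolding E_def N_def by (simp add: vec_eq_iff matrix_matrix_mult_def transpose_def)
  qed
  then show "matrix_inv G = (\<chi> j d. \<Sum>a\<in>UNIV. e a $ j * eta a a * e a $ d)" using mi by simp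
  show "matrix_inv G ** G = mat 1" using mi B by simp
  then show "G ** matrix_inv G = mat 1" using matrix_left_right_inverse by blast
qed

lemma lor_frame:
  assumes "lorentzian_on U g" "x \<in> U"
  obtains e where "\<And>a b. gform g x (e a) (e b) = eta a b"
proof -
  have "\<exists>e :: 4 \<Rightarrow> real^4. \<forall>a b. gform g x (e a) (e b) =
            (if a = b then (if a = 0 then -1 else 1) else 0)" using assms unfolding lorentzian_on_def by auto
  then obtain e :: "4 \<Rightarrow> real^4" where "\<forall>a b. gform g x (e a) (e b) = eta a b" unfolding eta_def by auto
  then show ?thesis using that by auto
qed

lemma lor_sym: "lorentzian_on U g \<Longrightarrow> x \<in> U \<Longrightarrow> g x $ a $ b = g x $ b $ a"
  unfolding lorentzian_on_def by simp

lemma lor_smooth: "lorentzian_on U g \<Longrightarrow> smooth_on U (\<lambda>y. g y $ a $ b)"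
  unfolding lorentzian_on_def by simp

lemma lor_inv:
  assumes "lorentzian_on U g" "x \<in> U"
  shows "g x ** ginv g x = mat 1" "ginv g x ** g x = mat 1"
proof -
  obtain e where e: "\<And>a b. gform g x (e a) (e b) = eta a b" using lor_frame[OF assms] by blast
  have e': "\<And>a b. (\<Sum>c\<in>UNIV. \<Sum>d\<in>UNIV. e a $ c * e b $ d * g x $ c $ d) = eta a b"
    using e unfolding gform_def .
  show "g x ** ginv g x = mat 1" "ginv g x ** g x = mat 1"
    unfolding ginv_def using frame_inv(2,3)[OF e'] by auto
qed

lemma lor_hsym:
  assumes "lorentzian_on U g" "x \<in> U"
  shows "ginv g x $ a $ b = ginv g x $ b $ a"
proof -
  obtain e where "\<And>a b. gform g x (e a) (e b) = eta a b" using lor_frame[OF assms] by blast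
  then have e': "\<And>a b. (\<Sum>c\<in>UNIV. \<Sum>d\<in>UNIV. e a $ c * e b $ d * g x $ c $ d) = eta a b"
    unfolding gform_def .
  have "ginv g x = (\<chi> j d. \<Sum>a\<in>UNIV. e a $ j * eta a a * e a $ d)"
    unfolding ginv_def using frame_inv(1)[OF e'] .
  then show ?thesis by (simp add: mult_ac)
qed

lemma hg: 
  assumes "lorentzian_on U g" "x \<in> U"
  shows "(\<Sum>b\<in>UNIV. ginv g x $ a $ b * g x $ b $ c) = (if a = c then 1 else 0)"
    and "(\<Sum>b\<in>UNIV. g x $ a $ b * ginv g x $ b $ c) = (if a = c then 1 else 0)"
proof -
  have "(ginv g x ** g x) $ a $ c = mat 1 $ a $ c" "(g x ** ginv g x) $ a $ c = mat 1 $ a $ c"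
    using lor_inv[OF assms] by simp_all
  then show "(\<Sum>b\<in>UNIV. ginv g x $ a $ b * g x $ b $ c) = (if a = c then 1 else 0)"
    and "(\<Sum>b\<in>UNIV. g x $ a $ b * ginv g x $ b $ c) = (if a = c then 1 else 0)"
    by (simp_all add: matrix_matrix_mult_def mat_def)
qed

lemma lor_det: assumes "lorentzian_on U g" "x \<in> U" shows "det (g x) \<noteq> 0"
proof -
  have "invertible (g x)" unfolding invertible_def using lor_inv[OF assms] by blast
  then show ?thesis using invertible_det_nz by blast
qed

lemma smooth_det:
  assumes "open U" "\<And>a b. smooth_on U (\<lambda>y. M y $ a $ b)"
  shows "smooth_on U (\<lambda>y. det (M y :: real^4^4))"
  unfolding det_def
  by (intro smooth_sum smooth_mult smooth_const smooth_prod assms) (auto simp: finite_permutations)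

lemma inv_col: "(A *v axis j 1) $ k = (A :: real^4^4) $ k $ j"
  by (simp add: matrix_vector_mult_def axis_def if_distrib cong: if_cong)

lemma smooth_ginv:
  assumes U: "open U" and L: "lorentzian_on U g"
  shows "smooth_on U (\<lambda>y. ginv g y $ k $ j)"
proof -
  define M where "M y = (\<chi> a b. if b = k then axis j 1 $ a else g y $ a $ b)" for y :: pt
  have "smooth_on U (\<lambda>y. det (M y) * inverse (det (g y)))"
  proof (intro smooth_mult smooth_inverse smooth_det U)
    show "smooth_on U (\<lambda>y. M y $ a $ b)" for a b
      unfolding M_def by (cases "b = k") (auto intro: smooth_const lor_smooth[OF L])
    show "smooth_on U (\<lambda>y. g y $ a $ b)" for a b by (rule lor_smooth[OF L])
    show "y \<in> U \<Longrightarrow> det (g y) \<noteq> 0" for y using lor_det[OF L] by blast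
  qed
  then show ?thesis
  proof (rule smooth_cong[OF U, rotated])
    fix y assume y: "y \<in> U"
    have d: "det (g y) \<noteq> 0" using lor_det[OF L y] .
    have "g y *v (ginv g y *v axis j 1) = axis j 1"
      using lor_inv(1)[OF L y] by (simp add: matrix_vector_mul_assoc)
    then have "ginv g y *v axis j 1 = (\<chi> k. det(\<chi> i j'. if j'=k then axis j 1 $ i else g y $i$j') / det (g y))"
      using cramer[OF d] by blast
    then have "(ginv g y *v axis j 1) $ k = det (M y) / det (g y)" by (simp add: M_def)
    then show "det (M y) * inverse (det (g y)) = ginv g y $ k $ j" by (simp add: inv_col divide_inverse)
  qed
qed


locale LOR =
  fixes U :: "pt set" and g :: "pt \<Rightarrow> real^4^4"
  assumes U: "open U" and L: "lorentzian_on U g"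
begin

lemma sdiff: "smooth_on U f \<Longrightarrow> x \<in> U \<Longrightarrow> f differentiable (at x)"
  using smooth_diff_at[OF U] by blast

lemma sm_g: "smooth_on U (\<lambda>y. g y $ a $ b)" by (rule lor_smooth[OF L])
lemma sm_h: "smooth_on U (\<lambda>y. ginv g y $ a $ b)" by (rule smooth_ginv[OF U L])
lemma sm_dg: "smooth_on U (pd e (\<lambda>y. g y $ a $ b))" by (rule smooth_pd[OF sm_g])

lemma sm_G: "smooth_on U (\<lambda>y. christoffel g y k i j)"
  unfolding christoffel_def
  by (intro smooth_mult smooth_const smooth_sum smooth_add smooth_diff U sm_h sm_dg) auto

lemma sm_dG: "smooth_on U (pd e (\<lambda>y. christoffel g y k i j))" by (rule smooth_pd[OF sm_G])

lemma sm_Rup: "smooth_on U (\<lambda>y. riem_up g y l i j k)"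
  unfolding riem_up_def
  by (intro smooth_mult smooth_sum smooth_add smooth_diff U sm_dG sm_G) auto

lemma sm_ric: "smooth_on U (\<lambda>y. ricci g y j k)"
  unfolding ricci_def by (intro smooth_sum U sm_Rup) auto

lemma sm_scal: "smooth_on U (\<lambda>y. scal g y)"
  unfolding scal_def by (intro smooth_sum smooth_mult U sm_h sm_ric) auto

lemma gsym: "x \<in> U \<Longrightarrow> g x $ a $ b = g x $ b $ a" by (rule lor_sym[OF L])
lemma hsym: "x \<in> U \<Longrightarrow> ginv g x $ a $ b = ginv g x $ b $ a" by (rule lor_hsym[OF L])

lemma dgsym: "x \<in> U \<Longrightarrow> pd e (\<lambda>y. g y $ a $ b) x = pd e (\<lambda>y. g y $ b $ a) x"
  by (rule pd_local[OF U]) (auto simp: gsym)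

lemma Gsym: "x \<in> U \<Longrightarrow> christoffel g x k i j = christoffel g x k j i"
  unfolding christoffel_def by (simp add: dgsym[of x _ i j] gsym[of x i j] algebra_simps)

lemma sum_delta_l: "(\<Sum>b\<in>UNIV. (if a = b then 1 else 0) * f b) = (f (a::4) :: real)"
proof -
  have "(\<lambda>b. (if a = b then 1 else 0) * f b) = (\<lambda>b. if a = b then f b else 0)" by auto
  then show ?thesis by (subst \<open>_ = _\<close>) (simp add: sum.delta sum.delta')
qed
lemma sum_delta_r: "(\<Sum>b\<in>UNIV. f b * (if b = a then 1 else 0)) = (f (a::4) :: real)"
proof -
  have "(\<lambda>b. f b * (if b = a then 1 else 0)) = (\<lambda>b. if b = a then f b else 0)" by auto
  then show ?thesis by (subst \<open>_ = _\<close>) (simp add: sum.delta sum.delta')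
qed

lemma hg1: "x \<in> U \<Longrightarrow> (\<Sum>b\<in>UNIV. ginv g x $ a $ b * g x $ b $ c) = (if a = c then 1 else 0)"
  by (rule hg(1)[OF L])
lemma hg2: "x \<in> U \<Longrightarrow> (\<Sum>b\<in>UNIV. g x $ a $ b * ginv g x $ b $ c) = (if a = c then 1 else 0)"
  by (rule hg(2)[OF L])

lemma lowerG:
  assumes x: "x \<in> U"
  shows "(\<Sum>m\<in>UNIV. christoffel g x m i j * g x $ m $ k) =
    (pd i (\<lambda>y. g y $ j $ k) x + pd j (\<lambda>y. g y $ i $ k) x - pd k (\<lambda>y. g y $ i $ j) x) / 2"
proof -
  define X where "X l = pd i (\<lambda>y. g y $ j $ l) x + pd j (\<lambda>y. g y $ i $ l) x - pd l (\<lambda>y. g y $ i $ j) x" for l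
  have "(\<Sum>m\<in>UNIV. christoffel g x m i j * g x $ m $ k)
      = (\<Sum>m\<in>UNIV. \<Sum>l\<in>UNIV. (1/2) * (ginv g x $ m $ l * X l * g x $ m $ k))"
    unfolding christoffel_def X_def by (simp add: sum_distrib_left sum_distrib_right mult_ac)
  also have "\<dots> = (\<Sum>l\<in>UNIV. (1/2) * X l * (\<Sum>m\<in>UNIV. ginv g x $ l $ m * g x $ m $ k))"
    by (subst sum.swap) (simp add: sum_distrib_left hsym[OF x] mult_ac)
  also have "\<dots> = X k / 2" by (simp add: hg1[OF x] if_distrib cong: if_cong)
  finally show ?thesis by (simp add: X_def)
qed

lemma compat:
  assumes x: "x \<in> U"
  shows "pd e (\<lambda>y. g y $ a $ b) x =
    (\<Sum>m\<in>UNIV. christoffel g x m e a * g x $ m $ b + christoffel g x m e b * g x $ a $ m)"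
proof -
  have "(\<Sum>m\<in>UNIV. christoffel g x m e a * g x $ m $ b + christoffel g x m e b * g x $ a $ m)
     = (\<Sum>m\<in>UNIV. christoffel g x m e a * g x $ m $ b) + (\<Sum>m\<in>UNIV. christoffel g x m e b * g x $ m $ a)"
    by (simp add: sum.distrib gsym[OF x, of a])
  also have "\<dots> = pd e (\<lambda>y. g y $ a $ b) x"
    unfolding lowerG[OF x] using dgsym[OF x, of _ a b] dgsym[OF x, of b a e] dgsym[OF x, of a b e]
    by (simp add: field_simps)
  finally show ?thesis by simp
qed

end


lemma swap3_1: "(\<Sum>a\<in>A. \<Sum>b\<in>B. \<Sum>c\<in>C. F a b c) = (\<Sum>b\<in>B. \<Sum>c\<in>C. \<Sum>a\<in>A. F a b c)"
  by (subst sum.swap) (rule sum.cong[OF refl], rule sum.swap)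
lemma swap3_2: "(\<Sum>a\<in>A. \<Sum>b\<in>B. \<Sum>c\<in>C. F a b c) = (\<Sum>c\<in>C. \<Sum>a\<in>A. \<Sum>b\<in>B. F a b c)"
  by (subst (2) sum.swap) (rule sum.cong[OF refl], rule sum.swap)

lemma dl1: "(if P then (1::real) else 0) * z = (if P then z else 0)" by simp
lemma dl2: "z * (if P then (1::real) else 0) = (if P then z else 0)" by simp
lemma dl3: "(if P then z else 0) * w = (if P then z * w else (0::real))" by simp
lemma dl4: "w * (if P then z else 0) = (if P then w * z else (0::real))" by simp
lemmas dsimps = dl1 dl2 dl3 dl4 sum.delta sum.delta'

context LOR begin

lemma dh:
  assumes x: "x \<in> U"
  shows "pd e (\<lambda>y. ginv g y $ a $ b) x =
    - (\<Sum>p\<in>UNIV. ginv g x $ a $ p * christoffel g x b e p + christoffel g x a e p * ginv g x $ p $ b)"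
proof -
  let ?h = "\<lambda>a b. ginv g x $ a $ b" and ?g = "\<lambda>a b. g x $ a $ b" and ?G = "\<lambda>k i j. christoffel g x k i j"
  let ?dh = "\<lambda>a b. pd e (\<lambda>y. ginv g y $ a $ b) x" and ?dg = "\<lambda>a b. pd e (\<lambda>y. g y $ a $ b) x"
  have E1: "(\<Sum>c\<in>UNIV. ?h a c * ?dg c d + ?dh a c * ?g c d) = 0" for d
  proof -
    have "pd e (\<lambda>y. \<Sum>c\<in>UNIV. ginv g y $ a $ c * g y $ c $ d) x = pd e (\<lambda>y. if a = d then 1 else 0) x"
      by (rule pd_local[OF U x]) (simp add: hg1)
    also have "\<dots> = 0" by (rule pd_const)
    finally have "pd e (\<lambda>y. \<Sum>c\<in>UNIV. ginv g y $ a $ c * g y $ c $ d) x = 0" .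
    moreover have "pd e (\<lambda>y. \<Sum>c\<in>UNIV. ginv g y $ a $ c * g y $ c $ d) x = (\<Sum>c\<in>UNIV. ?h a c * ?dg c d + ?dh a c * ?g c d)"
      by (subst pd_sum) (auto intro!: sum.cong pd_mult sdiff smooth_mult U sm_h sm_g x)
    ultimately show ?thesis by simp
  qed
  have E1': "(\<Sum>c\<in>UNIV. ?dh a c * ?g c d) = - (\<Sum>c\<in>UNIV. ?h a c * ?dg c d)" for d
    using E1[of d] unfolding sum.distrib by linarith
  have "?dh a b = (\<Sum>d\<in>UNIV. (\<Sum>c\<in>UNIV. ?dh a c * ?g c d) * ?h d b)"
  proof -
    have "(\<Sum>d\<in>UNIV. (\<Sum>c\<in>UNIV. ?dh a c * ?g c d) * ?h d b) = (\<Sum>c\<in>UNIV. ?dh a c * (\<Sum>d\<in>UNIV. ?g c d * ?h d b))"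
      by (simp add: sum_distrib_left sum_distrib_right mult_ac) (rule sum.swap)
    also have "\<dots> = ?dh a b" by (simp add: hg2[OF x] sum_delta_r)
    finally show ?thesis by simp
  qed
  also have "\<dots> = (\<Sum>d\<in>UNIV. (- (\<Sum>c\<in>UNIV. ?h a c * ?dg c d)) * ?h d b)"
    using E1' by simp
  also have "\<dots> = - (\<Sum>d\<in>UNIV. \<Sum>c\<in>UNIV. \<Sum>m\<in>UNIV. ?h a c * ?G m e c * ?g m d * ?h d b)
                  - (\<Sum>d\<in>UNIV. \<Sum>c\<in>UNIV. \<Sum>m\<in>UNIV. ?h a c * ?G m e d * ?g c m * ?h d b)"
    unfolding compat[OF x]
    by (simp add: sum_distrib_left sum_distrib_right sum.distrib algebra_simps sum_negf sum_subtractf)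
  also have "(\<Sum>d\<in>UNIV. \<Sum>c\<in>UNIV. \<Sum>m\<in>UNIV. ?h a c * ?G m e c * ?g m d * ?h d b)
           = (\<Sum>c\<in>UNIV. \<Sum>m\<in>UNIV. ?h a c * ?G m e c * (\<Sum>d\<in>UNIV. ?g m d * ?h d b))"
    by (subst swap3_1) (simp add: sum_distrib_left mult_ac)
  also have "\<dots> = (\<Sum>c\<in>UNIV. ?h a c * ?G b e c)"
    by (simp add: hg2[OF x] dsimps)
  also have "(\<Sum>d\<in>UNIV. \<Sum>c\<in>UNIV. \<Sum>m\<in>UNIV. ?h a c * ?G m e d * ?g c m * ?h d b)
           = (\<Sum>d\<in>UNIV. \<Sum>m\<in>UNIV. (\<Sum>c\<in>UNIV. ?h a c * ?g c m) * ?G m e d * ?h d b)"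
    by (rule sum.cong[OF refl], subst sum.swap, simp add: sum_distrib_left sum_distrib_right mult_ac)
  also have "\<dots> = (\<Sum>d\<in>UNIV. ?G a e d * ?h d b)"
    by (simp add: hg1[OF x] dsimps)
  finally show ?thesis by (simp add: sum.distrib)
qed

end


definition nab13 :: "(pt \<Rightarrow> real^4^4) \<Rightarrow> (pt \<Rightarrow> 4 \<Rightarrow> 4 \<Rightarrow> 4 \<Rightarrow> 4 \<Rightarrow> real) \<Rightarrow> pt \<Rightarrow> 4 \<Rightarrow> 4 \<Rightarrow> 4 \<Rightarrow> 4 \<Rightarrow> 4 \<Rightarrow> real" where
  "nab13 g Q x i l a b c = pd i (\<lambda>y. Q y l a b c) x +
     (\<Sum>m\<in>UNIV. christoffel g x l i m * Q x m a b c - christoffel g x m i a * Q x l m b c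
        - christoffel g x m i b * Q x l a m c - christoffel g x m i c * Q x l a b m)"

definition nab2 :: "(pt \<Rightarrow> real^4^4) \<Rightarrow> (pt \<Rightarrow> 4 \<Rightarrow> 4 \<Rightarrow> real) \<Rightarrow> pt \<Rightarrow> 4 \<Rightarrow> 4 \<Rightarrow> 4 \<Rightarrow> real" where
  "nab2 g S x i b c = pd i (\<lambda>y. S y b c) x -
     (\<Sum>m\<in>UNIV. christoffel g x m i b * S x m c + christoffel g x m i c * S x b m)"

lemma cov4_local:
  assumes "open U" "x \<in> U" "\<And>y. y \<in> U \<Longrightarrow> P y = P' y"
  shows "cov4 g P x = cov4 g P' x"
proof -
  have "pd i (\<lambda>y. P y a b c d) x = pd i (\<lambda>y. P' y a b c d) x" for i a b c d
    by (rule pd_local[OF assms(1,2)]) (simp add: assms(3))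
  then show ?thesis unfolding cov4_def using assms(2,3) by (intro ext) simp
qed

lemma cov4_add:
  assumes "\<And>a b c d. (\<lambda>y. P1 y a b c d) differentiable (at x)" "\<And>a b c d. (\<lambda>y. P2 y a b c d) differentiable (at x)"
  shows "cov4 g (\<lambda>y a b c d. P1 y a b c d + P2 y a b c d) x i a b c d = cov4 g P1 x i a b c d + cov4 g P2 x i a b c d"
  unfolding cov4_def using assms by (simp add: pd_add sum.distrib algebra_simps)

lemma cov4_diff:
  assumes "\<And>a b c d. (\<lambda>y. P1 y a b c d) differentiable (at x)" "\<And>a b c d. (\<lambda>y. P2 y a b c d) differentiable (at x)"
  shows "cov4 g (\<lambda>y a b c d. P1 y a b c d - P2 y a b c d) x i a b c d = cov4 g P1 x i a b c d - cov4 g P2 x i a b c d"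
  unfolding cov4_def using assms by (simp add: pd_diff sum_subtractf algebra_simps)

lemma cov4_cmult:
  assumes "\<And>a b c d. (\<lambda>y. P1 y a b c d) differentiable (at x)"
  shows "cov4 g (\<lambda>y a b c d. k * P1 y a b c d) x i a b c d = k * cov4 g P1 x i a b c d"
  unfolding cov4_def using assms by (simp add: pd_cmult sum_distrib_left algebra_simps)

context LOR begin

lemma cov4_lower:
  assumes Q: "\<And>l a b c. smooth_on U (\<lambda>y. Q y l a b c)" and x: "x \<in> U"
  shows "cov4 g (\<lambda>y a b c d. \<Sum>l\<in>UNIV. Q y l a b c * g y $ l $ d) x i a b c d
       = (\<Sum>l\<in>UNIV. nab13 g Q x i l a b c * g x $ l $ d)"
proof -
  have pdP: "pd i (\<lambda>y. \<Sum>l\<in>UNIV. Q y l a b c * g y $ l $ d) x =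
     (\<Sum>l\<in>UNIV. Q x l a b c * pd i (\<lambda>y. g y $ l $ d) x + pd i (\<lambda>y. Q y l a b c) x * g x $ l $ d)" for a b c d
    by (subst pd_sum) (auto intro!: sum.cong pd_mult sdiff smooth_mult U Q sm_g x)
  show ?thesis
    unfolding cov4_def nab13_def pdP compat[OF x]
    by (simp only: sum_4) (simp add: algebra_simps)
qed

lemma cov4_wedge:
  assumes S: "\<And>a b. smooth_on U (\<lambda>y. S y a b)" and x: "x \<in> U"
  shows "cov4 g (\<lambda>y a b c d. g y $ a $ d * S y b c + g y $ b $ c * S y a d
                 - g y $ a $ c * S y b d - g y $ b $ d * S y a c) x i a b c d
       = g x $ a $ d * nab2 g S x i b c + g x $ b $ c * nab2 g S x i a d
                 - g x $ a $ c * nab2 g S x i b d - g x $ b $ d * nab2 g S x i a c"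
proof -
  have dS: "(\<lambda>y. S y a b) differentiable (at x)" for a b using sdiff[OF S x] .
  have dg: "(\<lambda>y. g y $ a $ b) differentiable (at x)" for a b using sdiff[OF sm_g x] .
  have pdP: "pd i (\<lambda>y. g y $ a $ d * S y b c + g y $ b $ c * S y a d
                 - g y $ a $ c * S y b d - g y $ b $ d * S y a c) x =
     (g x $ a $ d * pd i (\<lambda>y. S y b c) x + pd i (\<lambda>y. g y $ a $ d) x * S x b c)
   + (g x $ b $ c * pd i (\<lambda>y. S y a d) x + pd i (\<lambda>y. g y $ b $ c) x * S x a d)
   - (g x $ a $ c * pd i (\<lambda>y. S y b d) x + pd i (\<lambda>y. g y $ a $ c) x * S x b d)
   - (g x $ b $ d * pd i (\<lambda>y. S y a c) x + pd i (\<lambda>y. g y $ b $ d) x * S x a c)" for a b c d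
    by (simp add: pd_add pd_diff pd_mult dS dg differentiable_mult differentiable_add differentiable_diff)
  show ?thesis
    unfolding cov4_def nab2_def pdP compat[OF x]
    by (simp only: sum_4) (simp add: algebra_simps)
qed

lemma cov4_G:
  assumes f: "smooth_on U f" and x: "x \<in> U"
  shows "cov4 g (\<lambda>y a b c d. f y * (g y $ a $ d * g y $ b $ c - g y $ a $ c * g y $ b $ d)) x i a b c d
       = pd i f x * (g x $ a $ d * g x $ b $ c - g x $ a $ c * g x $ b $ d)"
proof -
  have df: "f differentiable (at x)" using sdiff[OF f x] .
  have dg: "(\<lambda>y. g y $ a $ b) differentiable (at x)" for a b using sdiff[OF sm_g x] .
  have pdP: "pd i (\<lambda>y. f y * (g y $ a $ d * g y $ b $ c - g y $ a $ c * g y $ b $ d)) x =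
     f x * ((g x $ a $ d * pd i (\<lambda>y. g y $ b $ c) x + pd i (\<lambda>y. g y $ a $ d) x * g x $ b $ c)
           - (g x $ a $ c * pd i (\<lambda>y. g y $ b $ d) x + pd i (\<lambda>y. g y $ a $ c) x * g x $ b $ d))
     + pd i f x * (g x $ a $ d * g x $ b $ c - g x $ a $ c * g x $ b $ d)" for a b c d
    by (simp add: pd_add pd_diff pd_mult df dg differentiable_mult differentiable_add differentiable_diff)
  show ?thesis
    unfolding cov4_def pdP compat[OF x]
    by (simp only: sum_4) (simp add: algebra_simps)
qed

end


lemma bianchi_alg:
  fixes G :: "4\<Rightarrow>4\<Rightarrow>4\<Rightarrow>real" and dG :: "4\<Rightarrow>4\<Rightarrow>4\<Rightarrow>4\<Rightarrow>real" and ddG :: "4\<Rightarrow>4\<Rightarrow>4\<Rightarrow>4\<Rightarrow>4\<Rightarrow>real"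
  assumes sG: "\<And>k i j. G k i j = G k j i" and sdd: "\<And>f e k i j. ddG f e k i j = ddG e f k i j"
  defines "Rm \<equiv> \<lambda>l i j k. dG i l j k - dG j l i k + (\<Sum>m\<in>UNIV. G l i m * G m j k - G l j m * G m i k)"
  defines "dRm \<equiv> \<lambda>e l i j k. ddG e i l j k - ddG e j l i k + (\<Sum>m\<in>UNIV. dG e l i m * G m j k + G l i m * dG e m j k - dG e l j m * G m i k - G l j m * dG e m i k)"
  defines "nR \<equiv> \<lambda>e l i j k. dRm e l i j k + (\<Sum>m\<in>UNIV. G l e m * Rm m i j k - G m e i * Rm l m j k - G m e j * Rm l i m k - G m e k * Rm l i j m)"
  shows "nR e l i j k + nR i l j e k + nR j l e i k = 0"
proof -
  have s1: "G m i e = G m e i" "G m j i = G m i j" "G m e j = G m j e" for m using sG by auto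
  have s2: "ddG i e l j k = ddG e i l j k" "ddG j i l e k = ddG i j l e k" "ddG e j l i k = ddG j e l i k" using sdd by auto
  show ?thesis unfolding nR_def dRm_def Rm_def
    by (simp only: sum_4 s1 s2) (simp add: algebra_simps)
qed

context LOR begin

abbreviation "Rup \<equiv> (\<lambda>y l i j k. riem_up g y l i j k)"
abbreviation "Ric \<equiv> (\<lambda>y b c. ricci g y b c)"

lemma pd_Rup:
  assumes x: "x \<in> U"
  shows "pd e (\<lambda>y. riem_up g y l i j k) x =
    pd e (pd i (\<lambda>y. christoffel g y l j k)) x - pd e (pd j (\<lambda>y. christoffel g y l i k)) x
    + (\<Sum>m\<in>UNIV. pd e (\<lambda>y. christoffel g y l i m) x * christoffel g x m j k
         + christoffel g x l i m * pd e (\<lambda>y. christoffel g y m j k) x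
         - pd e (\<lambda>y. christoffel g y l j m) x * christoffel g x m i k
         - christoffel g x l j m * pd e (\<lambda>y. christoffel g y m i k) x)"
proof -
  have d1: "(\<lambda>y. christoffel g y k i j) differentiable (at x)" for k i j using sdiff[OF sm_G x] .
  have d2: "pd e (\<lambda>y. christoffel g y k i j) differentiable (at x)" for e k i j using sdiff[OF sm_dG x] .
  have d3: "(\<lambda>y. christoffel g y a b c * christoffel g y d e f) differentiable (at x)" for a b c d e f
    using d1 by (rule differentiable_mult) (rule d1)
  have "pd e (\<lambda>y. riem_up g y l i j k) x =
    pd e (pd i (\<lambda>y. christoffel g y l j k)) x - pd e (pd j (\<lambda>y. christoffel g y l i k)) x
    + (\<Sum>m\<in>UNIV. pd e (\<lambda>y. christoffel g y l i m * christoffel g y m j k) x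
                 - pd e (\<lambda>y. christoffel g y l j m * christoffel g y m i k) x)"
    unfolding riem_up_def
    by (simp add: pd_add pd_diff pd_sum d1 d2 d3 differentiable_add differentiable_diff differentiable_sum)
  also have "\<dots> = pd e (pd i (\<lambda>y. christoffel g y l j k)) x - pd e (pd j (\<lambda>y. christoffel g y l i k)) x
    + (\<Sum>m\<in>UNIV. pd e (\<lambda>y. christoffel g y l i m) x * christoffel g x m j k
         + christoffel g x l i m * pd e (\<lambda>y. christoffel g y m j k) x
         - pd e (\<lambda>y. christoffel g y l j m) x * christoffel g x m i k
         - christoffel g x l j m * pd e (\<lambda>y. christoffel g y m i k) x)"
    by (simp add: pd_mult d1 algebra_simps)
  finally show ?thesis .
qed

lemma bianchi:
  assumes x: "x \<in> U"
  shows "nab13 g Rup x e l i j k + nab13 g Rup x i l j e k + nab13 g Rup x j l e i k = 0"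
proof -
  have sdd: "pd f (pd e (\<lambda>y. christoffel g y k i j)) x = pd e (pd f (\<lambda>y. christoffel g y k i j)) x" for f e k i j
    by (rule schwarz[OF U smooth_Ck[OF sm_G] x])
  have rx: "riem_up g x l i j k = pd i (\<lambda>y. christoffel g y l j k) x - pd j (\<lambda>y. christoffel g y l i k) x
     + (\<Sum>m\<in>UNIV. christoffel g x l i m * christoffel g x m j k - christoffel g x l j m * christoffel g x m i k)"
    for l i j k by (simp add: riem_up_def)
  note B = bianchi_alg[where G = "christoffel g x" and dG = "\<lambda>e k i j. pd e (\<lambda>y. christoffel g y k i j) x"
          and ddG = "\<lambda>f e k i j. pd f (pd e (\<lambda>y. christoffel g y k i j)) x" and e=e and l=l and i=i and j=j and k=k]
  show ?thesis
    using B[OF Gsym[OF x] sdd] unfolding nab13_def pd_Rup[OF x] rx by simp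
qed

end


lemma pd_minus: "f differentiable (at x) \<Longrightarrow> pd i (\<lambda>y. - f y) x = - pd i f x"
  for f :: "pt \<Rightarrow> real"
  using pd_cmult[of f x i "-1"] by simp

lemma Rup_anti: "riem_up g y l a b c = - riem_up g y l b a c"
  unfolding riem_up_def by (simp only: sum_4; simp add: algebra_simps)

context LOR begin

lemma nab13_anti:
  assumes x: "x \<in> U"
  shows "nab13 g Rup x i l a b c = - nab13 g Rup x i l b a c"
proof -
  have "pd i (\<lambda>y. riem_up g y l a b c) x = pd i (\<lambda>y. - riem_up g y l b a c) x"
    by (subst Rup_anti) simp
  also have "\<dots> = - pd i (\<lambda>y. riem_up g y l b a c) x"
    by (rule pd_minus[OF sdiff[OF sm_Rup x]])
  finally have p: "pd i (\<lambda>y. riem_up g y l a b c) x = - pd i (\<lambda>y. riem_up g y l b a c) x" .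
  show ?thesis
    unfolding nab13_def p
    by (simp only: Rup_anti[of g x _ a b c] Rup_anti[of g x l _ b c] Rup_anti[of g x l a _ c] Rup_anti[of g x l a b _] sum_4
       ; simp add: algebra_simps)
qed

lemma pd_ric:
  assumes x: "x \<in> U"
  shows "pd i (\<lambda>y. ricci g y a c) x = (\<Sum>e\<in>UNIV. pd i (\<lambda>y. riem_up g y e e a c) x)"
  unfolding ricci_def by (rule pd_sum) (auto intro: sdiff[OF sm_Rup x])

lemma contr_ric:
  assumes x: "x \<in> U"
  shows "(\<Sum>e\<in>UNIV. nab13 g Rup x b e e a c) = nab2 g Ric x b a c"
  unfolding nab2_def pd_ric[OF x] 
  unfolding ricci_def nab13_def
  by (simp only: sum_4; simp add: algebra_simps)

lemma contracted_bianchi: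
  assumes x: "x \<in> U"
  shows "(\<Sum>e\<in>UNIV. nab13 g Rup x e e a b c) = nab2 g Ric x a b c - nab2 g Ric x b a c"
proof -
  have "nab13 g Rup x e e a b c = nab13 g Rup x a e e b c - nab13 g Rup x b e e a c" for e
    using bianchi[OF x, of e e a b c] nab13_anti[OF x, of a e b e c] by simp
  then have "(\<Sum>e\<in>UNIV. nab13 g Rup x e e a b c) = (\<Sum>e\<in>UNIV. nab13 g Rup x a e e b c) - (\<Sum>e\<in>UNIV. nab13 g Rup x b e e a c)"
    by (simp add: sum_subtractf)
  then show ?thesis by (simp add: contr_ric[OF x])
qed

lemma pd_scal:
  assumes x: "x \<in> U"
  shows "pd a (\<lambda>y. scal g y) x = (\<Sum>b\<in>UNIV. \<Sum>c\<in>UNIV. ginv g x $ b $ c * nab2 g Ric x a b c)"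
proof -
  have "pd a (\<lambda>y. scal g y) x = (\<Sum>b\<in>UNIV. \<Sum>c\<in>UNIV. ginv g x $ b $ c * pd a (\<lambda>y. ricci g y b c) x
        + pd a (\<lambda>y. ginv g y $ b $ c) x * ricci g x b c)"
  proof -
    have sm1: "smooth_on U (\<lambda>y. ginv g y $ b $ c * ricci g y b c)" for b c by (intro smooth_mult U sm_h sm_ric)
    have sm2: "smooth_on U (\<lambda>y. \<Sum>c\<in>UNIV. ginv g y $ b $ c * ricci g y b c)" for b by (intro smooth_sum U sm1) auto
    have "pd a (\<lambda>y. scal g y) x = (\<Sum>b\<in>UNIV. pd a (\<lambda>y. \<Sum>c\<in>UNIV. ginv g y $ b $ c * ricci g y b c) x)"
      unfolding scal_def by (rule pd_sum) (auto intro: sdiff[OF sm2 x])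
    also have "\<dots> = (\<Sum>b\<in>UNIV. \<Sum>c\<in>UNIV. pd a (\<lambda>y. ginv g y $ b $ c * ricci g y b c) x)"
      by (rule sum.cong[OF refl], rule pd_sum) (auto intro: sdiff[OF sm1 x])
    also have "\<dots> = (\<Sum>b\<in>UNIV. \<Sum>c\<in>UNIV. ginv g x $ b $ c * pd a (\<lambda>y. ricci g y b c) x
        + pd a (\<lambda>y. ginv g y $ b $ c) x * ricci g x b c)"
      by (intro sum.cong refl pd_mult sdiff[OF sm_h x] sdiff[OF sm_ric x])
    finally show ?thesis .
  qed
  also have "\<dots> = (\<Sum>b\<in>UNIV. \<Sum>c\<in>UNIV. ginv g x $ b $ c * nab2 g Ric x a b c)"
    unfolding dh[OF x] nab2_def
    by (simp only: sum_4; simp add: algebra_simps)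
  finally show ?thesis .
qed

end


lemma sum_if0: "(\<Sum>d\<in>A. if P then F d else 0) = (if P then (\<Sum>d\<in>A. F d) else (0::real))"
  by auto

lemma const_from_pd:
  assumes U: "open U" "connected U" and s: "smooth_on U \<sigma>"
    and z: "\<And>x a. x \<in> U \<Longrightarrow> pd a \<sigma> x = 0"
  shows "\<exists>c. \<forall>x\<in>U. \<sigma> x = c"
proof -
  have "\<sigma> constant_on U"
  proof (rule has_derivative_zero_connected_constant_on[OF U(2,1) finite.emptyI])
    show "continuous_on U \<sigma>" using Ck_cont[OF smooth_Ck[OF s, of 0]] .
    show "\<forall>x\<in>U - {}. (\<sigma> has_derivative (\<lambda>h. 0)) (at x within U)"
    proof
      fix x assume x: "x \<in> U - {}"
      have d: "(\<sigma> has_derivative frechet_derivative \<sigma> (at x)) (at x)"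
        using smooth_diff_at[OF U(1) s] x diffD by blast
      have lin: "linear (frechet_derivative \<sigma> (at x))" using d has_derivative_linear by blast
      have "frechet_derivative \<sigma> (at x) h = 0" for h
      proof -
        have "frechet_derivative \<sigma> (at x) h = frechet_derivative \<sigma> (at x) (\<Sum>i\<in>UNIV. (h$i) *\<^sub>R axis i 1)"
          using basis_expansion[of h] by (simp add: scalar_mult_eq_scaleR)
        also have "\<dots> = (\<Sum>i\<in>UNIV. h$i * frechet_derivative \<sigma> (at x) (axis i 1))"
          by (simp add: linear_sum[OF lin] linear_scale[OF lin])
        also have "\<dots> = 0" using z[of x] x by (simp add: pd_def)
        finally show ?thesis .
      qed
      then have "frechet_derivative \<sigma> (at x) = (\<lambda>h. 0)" by auto
      then show "(\<sigma> has_derivative (\<lambda>h. 0)) (at x within U)"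
        using d has_derivative_at_withinI by metis
    qed
  qed
  then show ?thesis
    unfolding constant_on_def by blast
qed

context LOR begin

lemma div_contract:
  assumes x: "x \<in> U" and D: "divergence_free U g P"
  shows "(\<Sum>j\<in>UNIV. \<Sum>d\<in>UNIV. ginv g x $ j $ d * cov4 g P x j a b c d) = 0"
proof -
  obtain e where e: "\<And>a b. gform g x (e a) (e b) = eta a b" using lor_frame[OF L x] by blast
  have of: "orthonormal_frame g x e" unfolding orthonormal_frame_def e eta_def by auto
  have z: "(\<Sum>i\<in>UNIV. gform g x (e i) (e i) * cov4_eval g P x (e i) (axis a 1) (axis b 1) (axis c 1) (e i)) = 0"
    using D x of unfolding divergence_free_def by blast
  have ce: "cov4_eval g P x (e i) (axis a 1) (axis b 1) (axis c 1) (e i) =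
     (\<Sum>j\<in>UNIV. \<Sum>d\<in>UNIV. e i $ j * e i $ d * cov4 g P x j a b c d)" for i
    unfolding cov4_eval_def axis_def by (simp add: dsimps sum_if0 mult_ac)
  have e': "\<And>a b. (\<Sum>c\<in>UNIV. \<Sum>d\<in>UNIV. e a $ c * e b $ d * g x $ c $ d) = eta a b"
    using e unfolding gform_def .
  have hf: "ginv g x $ j $ d = (\<Sum>i\<in>UNIV. e i $ j * eta i i * e i $ d)" for j d
    unfolding ginv_def frame_inv(1)[OF e'] by simp
  have "(\<Sum>j\<in>UNIV. \<Sum>d\<in>UNIV. ginv g x $ j $ d * cov4 g P x j a b c d)
     = (\<Sum>j\<in>UNIV. \<Sum>d\<in>UNIV. \<Sum>i\<in>UNIV. eta i i * (e i $ j * e i $ d * cov4 g P x j a b c d))"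
    unfolding hf by (simp add: sum_distrib_left sum_distrib_right mult_ac)
  also have "\<dots> = (\<Sum>i\<in>UNIV. \<Sum>j\<in>UNIV. \<Sum>d\<in>UNIV. eta i i * (e i $ j * e i $ d * cov4 g P x j a b c d))"
    by (rule swap3_2)
  also have "\<dots> = 0" using z unfolding ce e by (simp add: sum_distrib_left)
  finally show ?thesis .
qed

end


context LOR begin

lemma hgT: "x \<in> U \<Longrightarrow> (\<Sum>d\<in>UNIV. ginv g x $ j $ d * g x $ l $ d) = (if j = l then 1 else 0)"
  using hg1[of x j l] by (simp add: gsym[of x l])

lemma cA: "x \<in> U \<Longrightarrow> (\<Sum>j\<in>UNIV. \<Sum>d\<in>UNIV. ginv g x $ j $ d * (\<Sum>l\<in>UNIV. X j l * g x $ l $ d)) = (\<Sum>j\<in>UNIV. X j j)"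
proof -
  assume x: "x \<in> U"
  have "(\<Sum>d\<in>UNIV. ginv g x $ j $ d * (\<Sum>l\<in>UNIV. X j l * g x $ l $ d)) = (\<Sum>l\<in>UNIV. X j l * (\<Sum>d\<in>UNIV. ginv g x $ j $ d * g x $ l $ d))" for j
    by (simp add: sum_distrib_left sum_distrib_right mult_ac) (rule sum.swap)
  then show ?thesis by (simp add: hgT[OF x] dsimps)
qed

lemma cB: "x \<in> U \<Longrightarrow> (\<Sum>j\<in>UNIV. \<Sum>d\<in>UNIV. ginv g x $ j $ d * (g x $ a $ d * Y j)) = Y a"
proof -
  assume x: "x \<in> U"
  have "(\<Sum>j\<in>UNIV. \<Sum>d\<in>UNIV. ginv g x $ j $ d * (g x $ a $ d * Y j)) = (\<Sum>j\<in>UNIV. Y j * (\<Sum>d\<in>UNIV. ginv g x $ j $ d * g x $ a $ d))"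
    by (simp add: sum_distrib_left sum_distrib_right mult_ac)
  then show ?thesis by (simp add: hgT[OF x] dsimps)
qed

lemma c4: "x \<in> U \<Longrightarrow> (\<Sum>b\<in>UNIV. \<Sum>c\<in>UNIV. ginv g x $ b $ c * g x $ b $ c) = 4"
  by (simp add: hgT)

lemma contraction_alg:
  assumes x: "x \<in> U"
  shows "(\<Sum>b\<in>UNIV. \<Sum>c\<in>UNIV. ginv g x $ b $ c * (\<Sum>j\<in>UNIV. \<Sum>d\<in>UNIV. ginv g x $ j $ d *
      ((\<Sum>l\<in>UNIV. N j l b c * g x $ l $ d)
       + 1/2 * (g x $ a $ d * R2 j b c + g x $ b $ c * R2 j a d - g x $ a $ c * R2 j b d - g x $ b $ d * R2 j a c)
       - dF j * (g x $ a $ d * g x $ b $ c - g x $ a $ c * g x $ b $ d))))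
   = (\<Sum>b\<in>UNIV. \<Sum>c\<in>UNIV. ginv g x $ b $ c * (\<Sum>j\<in>UNIV. N j j b c))
     + 1/2 * (\<Sum>b\<in>UNIV. \<Sum>c\<in>UNIV. ginv g x $ b $ c * R2 a b c)
     + (\<Sum>b\<in>UNIV. \<Sum>c\<in>UNIV. ginv g x $ b $ c * R2 b a c) - 3 * dF a"
proof -
  let ?h = "\<lambda>j d. ginv g x $ j $ d" and ?g = "\<lambda>j d. g x $ j $ d"
  define B where "B a = (\<Sum>j\<in>UNIV. \<Sum>d\<in>UNIV. ?h j d * R2 j a d)" for a
  have inner: "(\<Sum>j\<in>UNIV. \<Sum>d\<in>UNIV. ?h j d *
      ((\<Sum>l\<in>UNIV. N j l b c * ?g l d)
       + 1/2 * (?g a d * R2 j b c + ?g b c * R2 j a d - ?g a c * R2 j b d - ?g b d * R2 j a c)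
       - dF j * (?g a d * ?g b c - ?g a c * ?g b d)))
     = (\<Sum>j\<in>UNIV. N j j b c) + 1/2 * (R2 a b c + ?g b c * B a - ?g a c * B b - R2 b a c)
       - (dF a * ?g b c - ?g a c * dF b)" for b c
  proof -
    have "(\<Sum>j\<in>UNIV. \<Sum>d\<in>UNIV. ?h j d *
      ((\<Sum>l\<in>UNIV. N j l b c * ?g l d)
       + 1/2 * (?g a d * R2 j b c + ?g b c * R2 j a d - ?g a c * R2 j b d - ?g b d * R2 j a c)
       - dF j * (?g a d * ?g b c - ?g a c * ?g b d)))
     = (\<Sum>j\<in>UNIV. \<Sum>d\<in>UNIV. ?h j d * (\<Sum>l\<in>UNIV. N j l b c * ?g l d))
       + 1/2 * (\<Sum>j\<in>UNIV. \<Sum>d\<in>UNIV. ?h j d * (?g a d * R2 j b c))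
       + 1/2 * ?g b c * B a - 1/2 * ?g a c * B b
       - 1/2 * (\<Sum>j\<in>UNIV. \<Sum>d\<in>UNIV. ?h j d * (?g b d * R2 j a c))
       - ?g b c * (\<Sum>j\<in>UNIV. \<Sum>d\<in>UNIV. ?h j d * (?g a d * dF j))
       + ?g a c * (\<Sum>j\<in>UNIV. \<Sum>d\<in>UNIV. ?h j d * (?g b d * dF j))"
      unfolding B_def by (simp only: sum_4; simp add: algebra_simps)
    also have "\<dots> = (\<Sum>j\<in>UNIV. N j j b c) + 1/2 * (R2 a b c + ?g b c * B a - ?g a c * B b - R2 b a c)
       - (dF a * ?g b c - ?g a c * dF b)"
      by (simp only: cA[OF x] cB[OF x]) (simp add: algebra_simps)
    finally show ?thesis .
  qed
  have "(\<Sum>b\<in>UNIV. \<Sum>c\<in>UNIV. ?h b c * ((\<Sum>j\<in>UNIV. N j j b c) + 1/2 * (R2 a b c + ?g b c * B a - ?g a c * B b - R2 b a c)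
       - (dF a * ?g b c - ?g a c * dF b)))
     = (\<Sum>b\<in>UNIV. \<Sum>c\<in>UNIV. ?h b c * (\<Sum>j\<in>UNIV. N j j b c))
       + 1/2 * (\<Sum>b\<in>UNIV. \<Sum>c\<in>UNIV. ?h b c * R2 a b c)
       + 1/2 * B a * (\<Sum>b\<in>UNIV. \<Sum>c\<in>UNIV. ?h b c * ?g b c)
       - 1/2 * (\<Sum>b\<in>UNIV. \<Sum>c\<in>UNIV. ?h b c * (?g a c * B b))
       - 1/2 * (\<Sum>b\<in>UNIV. \<Sum>c\<in>UNIV. ?h b c * R2 b a c)
       - dF a * (\<Sum>b\<in>UNIV. \<Sum>c\<in>UNIV. ?h b c * ?g b c)
       + (\<Sum>b\<in>UNIV. \<Sum>c\<in>UNIV. ?h b c * (?g a c * dF b))"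
    by (simp only: sum_4; simp add: algebra_simps)
  also have "\<dots> = (\<Sum>b\<in>UNIV. \<Sum>c\<in>UNIV. ?h b c * (\<Sum>j\<in>UNIV. N j j b c))
     + 1/2 * (\<Sum>b\<in>UNIV. \<Sum>c\<in>UNIV. ?h b c * R2 a b c)
     + (\<Sum>b\<in>UNIV. \<Sum>c\<in>UNIV. ?h b c * R2 b a c) - 3 * dF a"
    by (simp only: cB[OF x] c4[OF x]) (simp add: B_def algebra_simps)
  finally show ?thesis using inner by simp
qed

end


context LOR begin

lemma key:
  assumes x: "x \<in> U" and k: "\<kappa> \<noteq> 0"
    and hT: "\<forall>y\<in>U. \<forall>a b. ricci g y a b - scal g y / 2 * g y $ a $ b = \<kappa> * T y a b"
    and s\<sigma>: "smooth_on U \<sigma>"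
    and D: "divergence_free U g (space_matter g \<kappa> T \<sigma>)"
  shows "pd a \<sigma> x = 0"
proof -
  define F where "F = (\<lambda>y. inverse 2 * scal g y + \<sigma> y)"
  define P1 where "P1 = (\<lambda>y a b c d. \<Sum>l\<in>UNIV. riem_up g y l a b c * g y $ l $ d)"
  define W where "W = (\<lambda>y a b c d. g y $ a $ d * ricci g y b c + g y $ b $ c * ricci g y a d
                 - g y $ a $ c * ricci g y b d - g y $ b $ d * ricci g y a c)"
  define P3 where "P3 = (\<lambda>y a b c d. F y * (g y $ a $ d * g y $ b $ c - g y $ a $ c * g y $ b $ d))"
  define P12 where "P12 = (\<lambda>y a b c d. P1 y a b c d + 1/2 * W y a b c d)"
  define P' where "P' = (\<lambda>y a b c d. P12 y a b c d - P3 y a b c d)"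
  have PP: "space_matter g \<kappa> T \<sigma> y = P' y" if y: "y \<in> U" for y
  proof (intro ext)
    fix a b c d
    have Tv: "\<kappa> * T y a b = ricci g y a b - scal g y / 2 * g y $ a $ b" for a b
      using hT y by simp
    have e1: "\<kappa> / 2 * (g y $ a $ d * T y b c + g y $ b $ c * T y a d - g y $ a $ c * T y b d - g y $ b $ d * T y a c)
      = 1/2 * (g y $ a $ d * (\<kappa> * T y b c) + g y $ b $ c * (\<kappa> * T y a d) - g y $ a $ c * (\<kappa> * T y b d) - g y $ b $ d * (\<kappa> * T y a c))"
      by (simp add: algebra_simps)
    show "space_matter g \<kappa> T \<sigma> y a b c d = P' y a b c d"
      unfolding space_matter_def riem_def P'_def P12_def P1_def W_def P3_def F_def e1 Tv
      by (simp add: algebra_simps)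
  qed
  have sF: "smooth_on U F" unfolding F_def by (intro smooth_add smooth_mult U sm_scal s\<sigma> smooth_const)
  have sP1: "smooth_on U (\<lambda>y. P1 y a b c d)" for a b c d
    unfolding P1_def by (intro smooth_sum smooth_mult U sm_Rup sm_g) auto
  have sW: "smooth_on U (\<lambda>y. W y a b c d)" for a b c d
    unfolding W_def by (intro smooth_add smooth_diff smooth_mult U sm_ric sm_g)
  have sP3: "smooth_on U (\<lambda>y. P3 y a b c d)" for a b c d
    unfolding P3_def by (intro smooth_diff smooth_mult U sF sm_g)
  have sP12: "smooth_on U (\<lambda>y. P12 y a b c d)" for a b c d
    unfolding P12_def by (intro smooth_add smooth_mult U sP1 sW smooth_const)
  have cov: "cov4 g (space_matter g \<kappa> T \<sigma>) x j a b c d =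
      (\<Sum>l\<in>UNIV. nab13 g Rup x j l a b c * g x $ l $ d)
       + 1/2 * (g x $ a $ d * nab2 g Ric x j b c + g x $ b $ c * nab2 g Ric x j a d
                - g x $ a $ c * nab2 g Ric x j b d - g x $ b $ d * nab2 g Ric x j a c)
       - pd j F x * (g x $ a $ d * g x $ b $ c - g x $ a $ c * g x $ b $ d)" for j a b c d
  proof -
    have "cov4 g (space_matter g \<kappa> T \<sigma>) x j a b c d = cov4 g P' x j a b c d" by (simp add: cov4_local[OF U x PP])
    also have "cov4 g P' x j a b c d = cov4 g P12 x j a b c d - cov4 g P3 x j a b c d"
      unfolding P'_def by (rule cov4_diff) (auto intro: sdiff[OF sP12 x] sdiff[OF sP3 x])
    also have "cov4 g P12 x j a b c d = cov4 g P1 x j a b c d + cov4 g (\<lambda>y a b c d. 1/2 * W y a b c d) x j a b c d"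
      unfolding P12_def by (rule cov4_add) (rule sdiff[OF sP1 x], rule sdiff[OF smooth_mult[OF U smooth_const sW] x])
    also have "cov4 g (\<lambda>y a b c d. 1/2 * W y a b c d) x j a b c d = 1/2 * cov4 g W x j a b c d"
      by (rule cov4_cmult) (auto intro: sdiff[OF sW x])
    also have "cov4 g P1 x j a b c d = (\<Sum>l\<in>UNIV. nab13 g Rup x j l a b c * g x $ l $ d)"
      unfolding P1_def by (rule cov4_lower[OF sm_Rup x])
    also have "cov4 g W x j a b c d = g x $ a $ d * nab2 g Ric x j b c + g x $ b $ c * nab2 g Ric x j a d
                - g x $ a $ c * nab2 g Ric x j b d - g x $ b $ d * nab2 g Ric x j a c"
      unfolding W_def by (rule cov4_wedge[OF sm_ric x])
    also have "cov4 g P3 x j a b c d = pd j F x * (g x $ a $ d * g x $ b $ c - g x $ a $ c * g x $ b $ d)"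
      unfolding P3_def by (rule cov4_G[OF sF x])
    finally show ?thesis .
  qed
  have div0: "(\<Sum>j\<in>UNIV. \<Sum>d\<in>UNIV. ginv g x $ j $ d *
      ((\<Sum>l\<in>UNIV. nab13 g Rup x j l a b c * g x $ l $ d)
       + 1/2 * (g x $ a $ d * nab2 g Ric x j b c + g x $ b $ c * nab2 g Ric x j a d
                - g x $ a $ c * nab2 g Ric x j b d - g x $ b $ d * nab2 g Ric x j a c)
       - pd j F x * (g x $ a $ d * g x $ b $ c - g x $ a $ c * g x $ b $ d))) = 0" for b c
    using div_contract[OF x D, of a b c] unfolding cov .
  have "0 = (\<Sum>b\<in>UNIV. \<Sum>c\<in>UNIV. ginv g x $ b $ c * (\<Sum>j\<in>UNIV. \<Sum>d\<in>UNIV. ginv g x $ j $ d *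
      ((\<Sum>l\<in>UNIV. nab13 g Rup x j l a b c * g x $ l $ d)
       + 1/2 * (g x $ a $ d * nab2 g Ric x j b c + g x $ b $ c * nab2 g Ric x j a d
                - g x $ a $ c * nab2 g Ric x j b d - g x $ b $ d * nab2 g Ric x j a c)
       - pd j F x * (g x $ a $ d * g x $ b $ c - g x $ a $ c * g x $ b $ d))))"
    using div0 by simp
  also have "\<dots> = (\<Sum>b\<in>UNIV. \<Sum>c\<in>UNIV. ginv g x $ b $ c * (\<Sum>j\<in>UNIV. nab13 g Rup x j j a b c))
     + 1/2 * (\<Sum>b\<in>UNIV. \<Sum>c\<in>UNIV. ginv g x $ b $ c * nab2 g Ric x a b c)
     + (\<Sum>b\<in>UNIV. \<Sum>c\<in>UNIV. ginv g x $ b $ c * nab2 g Ric x b a c) - 3 * pd a F x"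
    by (rule contraction_alg[OF x])
  also have "\<dots> = 3/2 * pd a (\<lambda>y. scal g y) x - 3 * pd a F x"
  proof -
    have "(\<Sum>b\<in>UNIV. \<Sum>c\<in>UNIV. ginv g x $ b $ c * (\<Sum>j\<in>UNIV. nab13 g Rup x j j a b c))
       = (\<Sum>b\<in>UNIV. \<Sum>c\<in>UNIV. ginv g x $ b $ c * nab2 g Ric x a b c)
         - (\<Sum>b\<in>UNIV. \<Sum>c\<in>UNIV. ginv g x $ b $ c * nab2 g Ric x b a c)"
      unfolding contracted_bianchi[OF x] by (simp add: right_diff_distrib sum_subtractf)
    then show ?thesis unfolding pd_scal[OF x] by simp
  qed
  also have "pd a F x = inverse 2 * pd a (\<lambda>y. scal g y) x + pd a \<sigma> x"
  proof -
    have ds: "(\<lambda>y. scal g y) differentiable (at x)" using sdiff[OF sm_scal x] .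
    have "pd a F x = pd a (\<lambda>y. inverse 2 * scal g y) x + pd a \<sigma> x"
      unfolding F_def by (rule pd_add[OF sdiff[OF smooth_mult[OF U smooth_const sm_scal] x] sdiff[OF s\<sigma> x]])
    also have "pd a (\<lambda>y. inverse 2 * scal g y) x = inverse 2 * pd a (\<lambda>y. scal g y) x"
      by (rule pd_cmult[OF ds])
    finally show ?thesis .
  qed
  finally show ?thesis by simp
qed

end

theorem mainTheorem6:
  fixes U :: "pt set" and g :: "pt \<Rightarrow> real^4^4"
    and \<Psi>1 \<Psi>2 \<Psi>3 \<Psi>4 \<Psi>5 :: "pt \<Rightarrow> real" and \<xi>1 \<xi>2 :: "pt \<Rightarrow> real^4"
    and D T :: "pt \<Rightarrow> 4 \<Rightarrow> 4 \<Rightarrow> real" and \<sigma> :: "pt \<Rightarrow> real" and \<kappa> :: real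
  assumes "open U" and "connected U"
    and "msqe U g \<Psi>1 \<Psi>2 \<Psi>3 \<Psi>4 \<Psi>5 \<xi>1 \<xi>2 D"
    and "\<kappa> \<noteq> 0"
    and "\<forall>x\<in>U. \<forall>a b. ricci g x a b - scal g x / 2 * g x $ a $ b = \<kappa> * T x a b"
    and "smooth_on U \<sigma>"
    and "divergence_free U g (space_matter g \<kappa> T \<sigma>)"
  shows "\<exists>c. \<forall>x\<in>U. \<sigma> x = c"
proof -
  have L: "lorentzian_on U g" using assms(3) unfolding msqe_def by simp
  interpret LOR U g using assms(1) L by unfold_locales
  show ?thesis
    using const_from_pd[OF assms(1,2,6)] key[OF _ assms(4,5,6,7)] by blast
qed


end
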